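(* Let $\varphi_4\neq0$ and let $\Phi(\theta)=\dfrac{\varphi_3^2+2\varphi_4(r(\theta)\sin\theta-\varphi_2)}{r^4(\theta)}$. Suppose $\Theta_1<\Theta_2$ are such that $\Phi>0$ on $(\Theta_1,\Theta_2)$ and $\Phi(\Theta_1)=\Phi(\Theta_2)=0$, and let $\theta(t)$, $t\in\mathbb R$, be the angle function of a normal extremal ($M=1$) starting at the identity. Then, with $u_1(\theta)=\frac{r'(\theta)\sin\theta+r(\theta)\cos\theta}{r^2(\theta)}$, one has $\varphi_4u_1(\theta)>0$ for $\theta\in(\Theta_1,\Theta_2)$ sufficiently close to $\Theta_1$, and $\varphi_4u_1(\theta)<0$ for $\theta\in(\Theta_1,\Theta_2)$ sufficiently close to $\Theta_2$. Consequently, if $\theta(t_0)=\Theta_1$ (resp. $\theta(t_0)=\Theta_2$) and $\theta(t)\neq\Theta_1$ (resp. $\theta(t)\ne\Theta_2$) for all $t<t_0$, or for all $t>t_0$, sufficiently close to $t_0$, then $\dot\theta(t)(t-t_0)>0$ (resp. $\dot\theta(t)(t-t_0)<0$) for these $t$.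
   Context: Let $\mathfrak g$ be the Engel algebra with basis $X,Y,Z,V$, $[X,Y]=Z$, $[X,Z]=V$, all other brackets of basis elements zero; $G$ the corresponding connected simply connected Lie group, with coordinates of the first kind $(x,y,z,v)$ (identity $=0$). Let $F$ be an arbitrary norm on $\mathbb R^2$, $U=\{u:F(u)\le1\}$, $(u_1,u_2)\leftrightarrow u_1X(e)+u_2Y(e)$. The control system is $\dot x=u_1,\ \dot y=u_2,\ \dot z=\tfrac12(xu_2-yu_1),\ \dot v=-\tfrac12(z+\tfrac16xy)u_1+\tfrac1{12}x^2u_2$, measurable $u(t)\in U$, $x(0)=y(0)=z(0)=v(0)=0$. An extremal is a trajectory with control $u(t)$ for which there is a nowhere vanishing absolutely continuous $\psi=(\psi_1,\dots,\psi_4)$ with a.e. $\dot\psi_1=\tfrac1{12}\psi_4yu_1-(\tfrac12\psi_3+\tfrac16\psi_4x)u_2$, $\dot\psi_2=(\tfrac12\psi_3+\tfrac1{12}\psi_4x)u_1$, $\dot\psi_3=\tfrac12\psi_4u_1$, $\dot\psi_4=0$ and $h_1u_1(t)+h_2u_2(t)=\max_{u\in U}(h_1u_1+h_2u_2)=M$ a.e., with $h_1=\psi_1-\tfrac12\psi_3y-\tfrac1{12}\psi_4xy-\tfrac12\psi_4z$, $h_2=\psi_2+\tfrac12\psi_3x+\tfrac1{12}\psi_4x^2$, $M\ge0$ constant; normal means $M>0$, normalized to $M=1$. $\varphi_i=\psi_i(0)$. $F_U(h)=\max_{u\in U}h\cdot u$, $U^*=\{h:F_U(h)\le1\}$; $r(\theta)>0$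 with $F_U(r(\theta)\cos\theta,r(\theta)\sin\theta)=1$ is the polar equation of $\partial U^*$; $r'(\theta)$ denotes any number between the one-sided derivatives of $r$ at $\theta$. For $M=1$, $\theta(t)$ is a continuous function with $(h_1(t),h_2(t))=r(\theta(t))(\cos\theta(t),\sin\theta(t))$; it satisfies $\varphi_3+\varphi_4x(t)=r^2(\theta(t))\dot\theta(t)$ and $\dot\theta^2=\Phi(\theta)$. *)

theory Defs
  imports "HOL-Analysis.Analysis"
begin

text \<open>Vectors of R^2 are pairs (u1,u2); u = u1 X(e) + u2 Y(e).\<close>

definition is_norm2 :: "(real \<times> real \<Rightarrow> real) \<Rightarrow> bool" where
  "is_norm2 F \<longleftrightarrow> (\<forall>w. F w = 0 \<longleftrightarrow> w = 0) \<and>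
     (\<forall>c w. F (c *\<^sub>R w) = \<bar>c\<bar> * F w) \<and>
     (\<forall>v w. F (v + w) \<le> F v + F w)"

definition Uset :: "(real \<times> real \<Rightarrow> real) \<Rightarrow> (real \<times> real) set" where
  "Uset F = {u. F u \<le> 1}"

definition FU :: "(real \<times> real \<Rightarrow> real) \<Rightarrow> real \<times> real \<Rightarrow> real" where
  "FU F h = Sup ((\<lambda>u. fst h * fst u + snd h * snd u) ` Uset F)"

text \<open>Polar equation r(theta) of the boundary of U*.\<close>
definition rr :: "(real \<times> real \<Rightarrow> real) \<Rightarrow> real \<Rightarrow> real" where
  "rr F \<theta> = (THE r. r > 0 \<and> FU F (r * cos \<theta>, r * sin \<theta>) = 1)"

text \<open>d is an admissible value of r'(theta): a number between the one-sided derivatives.\<close>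
definition is_rprime :: "(real \<times> real \<Rightarrow> real) \<Rightarrow> real \<Rightarrow> real \<Rightarrow> bool" where
  "is_rprime F \<theta> d \<longleftrightarrow> (\<exists>dl dr. (rr F has_real_derivative dl) (at_left \<theta>) \<and>
      (rr F has_real_derivative dr) (at_right \<theta>) \<and> min dl dr \<le> d \<and> d \<le> max dl dr)"

definition u1fun :: "(real \<times> real \<Rightarrow> real) \<Rightarrow> real \<Rightarrow> real \<Rightarrow> real" where
  "u1fun F \<theta> d = (d * sin \<theta> + rr F \<theta> * cos \<theta>) / (rr F \<theta>)\<^sup>2"

definition Phi :: "(real \<times> real \<Rightarrow> real) \<Rightarrow> real \<Rightarrow> real \<Rightarrow> real \<Rightarrow> real \<Rightarrow> real" where
  "Phi F \<phi>2 \<phi>3 \<phi>4 \<theta> = (\<phi>3\<^sup>2 + 2 * \<phi>4 * (rr F \<theta> * sin \<theta> - \<phi>2)) / (rr F \<theta>) ^ 4"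

definition ham1 :: "real \<Rightarrow> real \<Rightarrow> real \<Rightarrow> real \<Rightarrow> real \<Rightarrow> real \<Rightarrow> real" where
  "ham1 p1 p3 p4 x y z = p1 - p3 * y / 2 - p4 * x * y / 12 - p4 * z / 2"

definition ham2 :: "real \<Rightarrow> real \<Rightarrow> real \<Rightarrow> real \<Rightarrow> real" where
  "ham2 p2 p3 p4 x = p2 + p3 * x / 2 + p4 * x\<^sup>2 / 12"

text \<open>Solution of an ODE in the absolutely continuous (Caratheodory) sense:
  f(b) - f(a) is the integral of the right-hand side over [a,b].\<close>
definition ac_sol :: "(real \<Rightarrow> real) \<Rightarrow> (real \<Rightarrow> real) \<Rightarrow> bool" where
  "ac_sol f g \<longleftrightarrow> (\<forall>a b. a \<le> b \<longrightarrow> (g has_integral (f b - f a)) {a..b})"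

text \<open>Normal extremal (M = 1) defined for all t in R, starting at the identity.\<close>
definition normal_extremal ::
  "(real \<times> real \<Rightarrow> real) \<Rightarrow> (real \<Rightarrow> real \<times> real) \<Rightarrow>
   (real \<Rightarrow> real) \<Rightarrow> (real \<Rightarrow> real) \<Rightarrow> (real \<Rightarrow> real) \<Rightarrow> (real \<Rightarrow> real) \<Rightarrow>
   (real \<Rightarrow> real) \<Rightarrow> (real \<Rightarrow> real) \<Rightarrow> (real \<Rightarrow> real) \<Rightarrow> (real \<Rightarrow> real) \<Rightarrow> bool" where
  "normal_extremal F u x y z v p1 p2 p3 p4 \<longleftrightarrow>
     u \<in> borel_measurable lborel \<and> (\<forall>t. u t \<in> Uset F) \<and>
     x 0 = 0 \<and> y 0 = 0 \<and> z 0 = 0 \<and> v 0 = 0 \<and>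
     ac_sol x (\<lambda>t. fst (u t)) \<and>
     ac_sol y (\<lambda>t. snd (u t)) \<and>
     ac_sol z (\<lambda>t. (x t * snd (u t) - y t * fst (u t)) / 2) \<and>
     ac_sol v (\<lambda>t. - (z t + x t * y t / 6) * fst (u t) / 2 + (x t)\<^sup>2 * snd (u t) / 12) \<and>
     (\<forall>t. (p1 t, p2 t, p3 t, p4 t) \<noteq> (0, 0, 0, 0)) \<and>
     ac_sol p1 (\<lambda>t. p4 t * y t * fst (u t) / 12 - (p3 t / 2 + p4 t * x t / 6) * snd (u t)) \<and>
     ac_sol p2 (\<lambda>t. (p3 t / 2 + p4 t * x t / 12) * fst (u t)) \<and>
     ac_sol p3 (\<lambda>t. p4 t * fst (u t) / 2) \<and>
     ac_sol p4 (\<lambda>t. 0) \<and>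
     (AE t in lborel.
        ham1 (p1 t) (p3 t) (p4 t) (x t) (y t) (z t) * fst (u t)
          + ham2 (p2 t) (p3 t) (p4 t) (x t) * snd (u t)
        = FU F (ham1 (p1 t) (p3 t) (p4 t) (x t) (y t) (z t), ham2 (p2 t) (p3 t) (p4 t) (x t))
      \<and> FU F (ham1 (p1 t) (p3 t) (p4 t) (x t) (y t) (z t), ham2 (p2 t) (p3 t) (p4 t) (x t)) = 1)"

definition angle_fun :: "(real \<times> real \<Rightarrow> real) \<Rightarrow> (real \<Rightarrow> real) \<Rightarrow> (real \<Rightarrow> real) \<Rightarrow> (real \<Rightarrow> real) \<Rightarrow> bool" where
  "angle_fun F h1 h2 \<theta> \<longleftrightarrow> continuous_on UNIV \<theta> \<and>
     (\<forall>t. h1 t = rr F (\<theta> t) * cos (\<theta> t) \<and> h2 t = rr F (\<theta> t) * sin (\<theta> t))"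

end

theory Submission
  imports Defs
begin

lemma norm2_nonneg: assumes "is_norm2 F" shows "F w \<ge> 0"
proof -
  have h: "\<And>c w. F (c *\<^sub>R w) = \<bar>c\<bar> * F w" and tr: "\<And>v w. F (v + w) \<le> F v + F w"
    using assms unfolding is_norm2_def by auto
  have "F (-w) = F w" using h[of "-1" w] by simp
  moreover have "F 0 = 0" using h[of 0 w] by simp
  moreover have "F (w + (-w)) \<le> F w + F (-w)" by (rule tr)
  ultimately show ?thesis by simp
qed

lemma norm2_upper: assumes "is_norm2 F" shows "F w \<le> (F (1,0) + F (0,1)) * norm w"
proof -
  have h: "\<And>c w. F (c *\<^sub>R w) = \<bar>c\<bar> * F w" and tr: "\<And>v w. F (v + w) \<le> F v + F w"
    using assms unfolding is_norm2_def by auto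
  obtain a b where w: "w = (a,b)" by (cases w)
  have ww: "w = a *\<^sub>R (1,0) + b *\<^sub>R (0,1)" using w by simp
  have "F w \<le> F (a *\<^sub>R (1,0)) + F (b *\<^sub>R (0,1))" by (subst ww) (rule tr)
  hence Fw: "F w \<le> \<bar>a\<bar> * F (1,0) + \<bar>b\<bar> * F (0,1)" by (simp only: h)
  moreover have "\<bar>a\<bar> \<le> norm w" "\<bar>b\<bar> \<le> norm w" unfolding w norm_Pair
    by (simp_all add: real_sqrt_ge_abs1 real_sqrt_ge_abs2)
  moreover have "F (1,0) \<ge> 0" "F (0,1) \<ge> 0" using norm2_nonneg[OF assms] by auto
  ultimately have "\<bar>a\<bar> * F (1,0) + \<bar>b\<bar> * F (0,1) \<le> norm w * F (1,0) + norm w * F (0,1)"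
    by (meson add_mono mult_right_mono)
  with Fw show ?thesis by (simp add: algebra_simps)
qed

lemma norm2_cont: assumes "is_norm2 F" shows "continuous_on UNIV F"
proof -
  let ?C = "F (1,0) + F (0,1)"
  have h: "\<And>c w. F (c *\<^sub>R w) = \<bar>c\<bar> * F w" and tr: "\<And>v w. F (v + w) \<le> F v + F w"
    using assms unfolding is_norm2_def by auto
  have "\<And>v w. \<bar>F v - F w\<bar> \<le> ?C * dist v w"
  proof -
    fix v w :: "real \<times> real"
    have "F v \<le> F w + F (v - w)" using tr[of w "v - w"] by simp
    moreover have "F w \<le> F v + F (w - v)" using tr[of v "w - v"] by simp
    moreover have "F (w - v) = F (v - w)" using h[of "-1" "v - w"] by simp
    moreover have "F (v - w) \<le> ?C * dist v w" using norm2_upper[OF assms, of "v - w"] by (simp add: dist_norm)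
    ultimately show "\<bar>F v - F w\<bar> \<le> ?C * dist v w" by linarith
  qed
  hence "?C-lipschitz_on UNIV F" unfolding lipschitz_on_def dist_real_def
    using norm2_nonneg[OF assms, of "(1,0)"] norm2_nonneg[OF assms, of "(0,1)"] by auto
  thus ?thesis by (rule lipschitz_on_continuous_on)
qed

lemma norm2_lower: assumes "is_norm2 F" shows "\<exists>m>0. \<forall>w. m * norm w \<le> F w"
proof -
  have h: "\<And>c w. F (c *\<^sub>R w) = \<bar>c\<bar> * F w" and z: "\<And>w. F w = 0 \<longleftrightarrow> w = 0"
    using assms unfolding is_norm2_def by auto
  have "compact (sphere (0::real\<times>real) 1)" by simp
  moreover have "sphere (0::real\<times>real) 1 \<noteq> {}" proof - have "((1::real),(0::real)) \<in> sphere 0 1" by simp thus ?thesis by blast qed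
  moreover have "continuous_on (sphere 0 1) F" using norm2_cont[OF assms] continuous_on_subset by blast
  ultimately obtain w0 where w0: "w0 \<in> sphere 0 1" "\<forall>y\<in>sphere 0 1. F w0 \<le> F y"
    using continuous_attains_inf by blast
  have "w0 \<noteq> 0" using w0 by auto
  hence m: "F w0 > 0" using z[of w0] norm2_nonneg[OF assms, of w0] by linarith
  have "\<forall>w. F w0 * norm w \<le> F w"
  proof
    fix w :: "real \<times> real"
    show "F w0 * norm w \<le> F w"
    proof (cases "w = 0")
      case True thus ?thesis using z[of 0] by simp
    next
      case False
      hence "(1/norm w) *\<^sub>R w \<in> sphere 0 1" by simp
      hence "F w0 \<le> F ((1/norm w) *\<^sub>R w)" using w0 by blast
      also have "\<dots> = F w / norm w" using h[of "1/norm w" w] by simp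
      finally show ?thesis using False by (simp add: field_simps)
    qed
  qed
  thus ?thesis using m by blast
qed

locale nrm =
  fixes F :: "real \<times> real \<Rightarrow> real"
  assumes isn: "is_norm2 F"
begin

definition mm where "mm = (SOME m. m > 0 \<and> (\<forall>w. m * norm w \<le> F w))"
definition CC where "CC = F (1,0) + F (0,1) + 1"
definition RR where "RR = 1 / mm"

lemma mm: "mm > 0" "\<And>w. mm * norm w \<le> F w"
  using someI_ex[OF norm2_lower[OF isn]] unfolding mm_def by auto

lemma CC: "CC > 0" "\<And>w. F w \<le> CC * norm w"
proof -
  have "F (1,0) \<ge> 0" "F (0,1) \<ge> 0" using norm2_nonneg[OF isn] by auto
  thus "CC > 0" unfolding CC_def by simp
  fix w
  have "F w \<le> (F (1,0) + F (0,1)) * norm w" by (rule norm2_upper[OF isn])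
  also have "\<dots> \<le> CC * norm w" unfolding CC_def by (simp add: mult_right_mono)
  finally show "F w \<le> CC * norm w" .
qed

lemma RR: "RR > 0" using mm unfolding RR_def by simp

lemma U_bound: "u \<in> Uset F \<Longrightarrow> norm u \<le> RR"
  using mm(2)[of u] mm(1) unfolding Uset_def RR_def by (simp add: field_simps)

lemma abs_fst: "\<bar>fst (u::real\<times>real)\<bar> \<le> norm u" "\<bar>snd (u::real\<times>real)\<bar> \<le> norm u"
  by (cases u; simp add: norm_Pair real_sqrt_ge_abs1 real_sqrt_ge_abs2)+

lemma U_fst: "u \<in> Uset F \<Longrightarrow> \<bar>fst u\<bar> \<le> RR" "u \<in> Uset F \<Longrightarrow> \<bar>snd u\<bar> \<le> RR"
  using U_bound abs_fst order_trans by blast+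

lemma dot_bound: "\<bar>fst h * fst u + snd h * snd u\<bar> \<le> norm h * norm u"
proof -
  have "fst h * fst u + snd h * snd u = inner h u" by (simp add: inner_prod_def)
  thus ?thesis using Cauchy_Schwarz_ineq2 by simp
qed

lemma U_ne: "(0::real\<times>real) \<in> Uset F"
proof -
  have "F 0 = 0" using isn unfolding is_norm2_def by blast
  thus ?thesis unfolding Uset_def by simp
qed

lemma bdd: "bdd_above ((\<lambda>u. fst h * fst u + snd h * snd u) ` Uset F)"
proof -
  have "\<forall>u\<in>Uset F. fst h * fst u + snd h * snd u \<le> norm h * RR"
  proof
    fix u assume "u \<in> Uset F"
    hence "norm h * norm u \<le> norm h * RR" using U_bound by (simp add: mult_left_mono)
    thus "fst h * fst u + snd h * snd u \<le> norm h * RR" using dot_bound[of h u] by linarith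
  qed
  thus ?thesis by (auto intro: bdd_aboveI2)
qed

lemma FU_upper: "u \<in> Uset F \<Longrightarrow> fst h * fst u + snd h * snd u \<le> FU F h"
  unfolding FU_def by (rule cSup_upper) (auto simp: bdd)

lemma FU_least: "(\<And>u. u \<in> Uset F \<Longrightarrow> fst h * fst u + snd h * snd u \<le> c) \<Longrightarrow> FU F h \<le> c"
  unfolding FU_def by (rule cSup_least) (use U_ne in auto)

lemma FU_le_norm: "FU F h \<le> RR * norm h"
proof (rule FU_least)
  fix u assume "u \<in> Uset F"
  hence "norm h * norm u \<le> norm h * RR" using U_bound by (simp add: mult_left_mono)
  thus "fst h * fst u + snd h * snd u \<le> RR * norm h" using dot_bound[of h u] by (simp add: mult.commute)
qed

lemma FU_ge_norm: "FU F h \<ge> norm h / CC"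
proof (cases "h = 0")
  case True thus ?thesis using FU_upper[OF U_ne, of h] by simp
next
  case False
  let ?u = "(1 / (CC * norm h)) *\<^sub>R h"
  have "F ?u = \<bar>1 / (CC * norm h)\<bar> * F h" using isn unfolding is_norm2_def by blast
  also have "\<dots> = F h / (CC * norm h)" using CC(1) False by simp
  also have "\<dots> \<le> 1" using CC(2)[of h] CC(1) False by (simp add: field_simps)
  finally have "?u \<in> Uset F" unfolding Uset_def by simp
  hence "fst h * fst ?u + snd h * snd ?u \<le> FU F h" by (rule FU_upper)
  moreover have "fst h * fst ?u + snd h * snd ?u = (fst h ^ 2 + snd h ^ 2) / (CC * norm h)"
    by (simp add: power2_eq_square add_divide_distrib)
  moreover have "fst h ^ 2 + snd h ^ 2 = norm h ^ 2"
    by (cases h) (simp add: norm_Pair)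
  moreover have "norm h ^ 2 / (CC * norm h) = norm h / CC" using False
    by (simp add: power2_eq_square)
  ultimately show ?thesis by simp
qed

lemma FU_add: "FU F (h + k) \<le> FU F h + FU F k"
proof (rule FU_least)
  fix u assume u: "u \<in> Uset F"
  have "fst (h + k) * fst u + snd (h + k) * snd u = (fst h * fst u + snd h * snd u) + (fst k * fst u + snd k * snd u)"
    by (simp add: algebra_simps)
  thus "fst (h + k) * fst u + snd (h + k) * snd u \<le> FU F h + FU F k"
    using FU_upper[OF u, of h] FU_upper[OF u, of k] by linarith
qed

lemma FU_zero: "FU F 0 = 0"
  using FU_upper[OF U_ne, of 0] FU_least[of 0 0] by (simp add: antisym)

lemma FU_scale_le: assumes c: "c \<ge> 0" shows "FU F (c *\<^sub>R h) \<le> c * FU F h"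
proof (rule FU_least)
  fix u assume u: "u \<in> Uset F"
  have "fst (c *\<^sub>R h) * fst u + snd (c *\<^sub>R h) * snd u = c * (fst h * fst u + snd h * snd u)"
    by (simp add: algebra_simps)
  also have "\<dots> \<le> c * FU F h" using FU_upper[OF u, of h] c by (rule mult_left_mono)
  finally show "fst (c *\<^sub>R h) * fst u + snd (c *\<^sub>R h) * snd u \<le> c * FU F h" .
qed

lemma FU_scale: "c \<ge> 0 \<Longrightarrow> FU F (c *\<^sub>R h) = c * FU F h"
proof (cases "c = 0")
  case True thus ?thesis using FU_zero by simp
next
  case False
  assume c: "c \<ge> 0"
  hence c': "c > 0" using False by simp
  have "FU F h = FU F ((1/c) *\<^sub>R (c *\<^sub>R h))" using c' by simp
  also have "\<dots> \<le> (1/c) * FU F (c *\<^sub>R h)" using c' by (intro FU_scale_le) simp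
  finally have "c * FU F h \<le> FU F (c *\<^sub>R h)" using c' by (simp add: field_simps)
  thus ?thesis using FU_scale_le[OF c, of h] by linarith
qed

lemma FU_scale_any: "c * FU F h \<le> FU F (c *\<^sub>R h)"
proof (cases "c \<ge> 0")
  case True thus ?thesis using FU_scale by simp
next
  case False
  have "0 \<le> FU F h + FU F (-h)" using FU_add[of h "-h"] FU_zero by simp
  moreover have "FU F (c *\<^sub>R h) = (-c) * FU F (-h)" using FU_scale[of "-c" "-h"] False by simp
  moreover have "0 \<le> (-c) * (FU F h + FU F (-h))" using False \<open>0 \<le> FU F h + FU F (-h)\<close>
    by (intro mult_nonneg_nonneg) auto
  hence "c * FU F h \<le> (-c) * FU F (-h)" by (simp add: algebra_simps)
  ultimately show ?thesis by simp
qed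

lemma FU_lip: "\<bar>FU F h - FU F k\<bar> \<le> RR * norm (h - k)"
proof -
  have "FU F h \<le> FU F k + FU F (h - k)" using FU_add[of k "h - k"] by simp
  moreover have "FU F k \<le> FU F h + FU F (k - h)" using FU_add[of h "k - h"] by simp
  moreover have "FU F (h - k) \<le> RR * norm (h - k)" "FU F (k - h) \<le> RR * norm (h - k)"
    using FU_le_norm[of "h-k"] FU_le_norm[of "k-h"] by (auto simp: norm_minus_commute)
  ultimately show ?thesis by linarith
qed

lemma FU_cont: "continuous_on UNIV (FU F)"
proof -
  have "RR-lipschitz_on UNIV (FU F)" unfolding lipschitz_on_def dist_real_def dist_norm
    using FU_lip RR by auto
  thus ?thesis by (rule lipschitz_on_continuous_on)
qed

end

context nrm begin

definition rho :: "real \<Rightarrow> real" where "rho \<theta> = FU F (cos \<theta>, sin \<theta>)"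

lemma norm_e: "norm (cos (\<theta>::real), sin \<theta>) = 1"
  by (simp add: norm_Pair real_norm_def)

lemma rho_ge: "rho \<theta> \<ge> 1 / CC"
  using FU_ge_norm[of "(cos \<theta>, sin \<theta>)"] by (simp add: rho_def norm_e)

lemma rho_pos: "rho \<theta> > 0"
proof -
  have "1 / CC > 0" using CC(1) by simp
  thus ?thesis using rho_ge[of \<theta>] by linarith
qed

lemma rho_le: "rho \<theta> \<le> RR"
  using FU_le_norm[of "(cos \<theta>, sin \<theta>)"] unfolding rho_def norm_e by simp

lemma rr_eq: "rr F \<theta> = 1 / rho \<theta>"
  unfolding rr_def
proof (rule the_equality)
  have "FU F (1 / rho \<theta> * cos \<theta>, 1 / rho \<theta> * sin \<theta>) = FU F ((1 / rho \<theta>) *\<^sub>R (cos \<theta>, sin \<theta>))" by simp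
  also have "\<dots> = 1" using FU_scale[of "1 / rho \<theta>" "(cos \<theta>, sin \<theta>)"] rho_pos[of \<theta>]
    unfolding rho_def by simp
  finally show "0 < 1 / rho \<theta> \<and> FU F (1 / rho \<theta> * cos \<theta>, 1 / rho \<theta> * sin \<theta>) = 1"
    using rho_pos[of \<theta>] by simp
next
  fix r assume r: "0 < r \<and> FU F (r * cos \<theta>, r * sin \<theta>) = 1"
  have "FU F (r * cos \<theta>, r * sin \<theta>) = FU F (r *\<^sub>R (cos \<theta>, sin \<theta>))" by simp
  also have "\<dots> = r * rho \<theta>" using FU_scale[of r "(cos \<theta>, sin \<theta>)"] r unfolding rho_def by simp
  finally have "r * rho \<theta> = 1" using r by simp
  thus "r = 1 / rho \<theta>" using rho_pos[of \<theta>] by (simp add: field_simps)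
qed

lemma rr_pos: "rr F \<theta> > 0" using rr_eq rho_pos by simp

lemma rho_rr: "rho \<theta> = inverse (rr F \<theta>)" using rr_eq rho_pos by simp

lemma rho_cont: "continuous_on UNIV rho"
proof -
  have "continuous_on UNIV (\<lambda>\<theta>. FU F (cos \<theta>, sin \<theta>))"
    by (rule continuous_on_compose2[OF FU_cont]) (auto intro!: continuous_intros)
  thus ?thesis unfolding rho_def[abs_def] .
qed

lemma rho_isCont: "isCont rho x"
  using rho_cont continuous_on_eq_continuous_at by blast

lemma rr_isCont: "isCont (rr F) x"
proof -
  have "rho x \<noteq> 0" using rho_pos[of x] by simp
  hence "isCont (\<lambda>y. inverse (rho y)) x" using rho_isCont[of x]
    by (intro continuous_intros)
  moreover have "(\<lambda>y. inverse (rho y)) = rr F" using rr_eq by (auto simp: field_simps)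
  ultimately show ?thesis by simp
qed

lemma trip:
  assumes "sin (\<gamma> - \<beta>) \<ge> 0" "sin (\<beta> - \<alpha>) \<ge> 0"
  shows "rho \<beta> * sin (\<gamma> - \<alpha>) \<le> rho \<alpha> * sin (\<gamma> - \<beta>) + rho \<gamma> * sin (\<beta> - \<alpha>)"
proof -
  have id: "sin (\<gamma> - \<alpha>) *\<^sub>R (cos \<beta>, sin \<beta>) = sin (\<gamma> - \<beta>) *\<^sub>R (cos \<alpha>, sin \<alpha>) + sin (\<beta> - \<alpha>) *\<^sub>R (cos \<gamma>, sin \<gamma>)"
    by (simp add: sin_diff algebra_simps)
  have "rho \<beta> * sin (\<gamma> - \<alpha>) = sin (\<gamma> - \<alpha>) * FU F (cos \<beta>, sin \<beta>)" unfolding rho_def by simp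
  also have "\<dots> \<le> FU F (sin (\<gamma> - \<alpha>) *\<^sub>R (cos \<beta>, sin \<beta>))" by (rule FU_scale_any)
  also have "\<dots> \<le> FU F (sin (\<gamma> - \<beta>) *\<^sub>R (cos \<alpha>, sin \<alpha>)) + FU F (sin (\<beta> - \<alpha>) *\<^sub>R (cos \<gamma>, sin \<gamma>))"
    unfolding id by (rule FU_add)
  also have "\<dots> = rho \<alpha> * sin (\<gamma> - \<beta>) + rho \<gamma> * sin (\<beta> - \<alpha>)"
    using FU_scale[of "sin (\<gamma> - \<beta>)" "(cos \<alpha>, sin \<alpha>)"] FU_scale[of "sin (\<beta> - \<alpha>)" "(cos \<gamma>, sin \<gamma>)"] assms
    unfolding rho_def by (simp add: mult.commute)
  finally show ?thesis .
qed

lemma rho_deriv: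
  assumes "(rr F has_real_derivative D) (at s within S)"
  shows "(rho has_real_derivative (- D * (rho s)\<^sup>2)) (at s within S)"
proof -
  have 1: "((\<lambda>y. inverse (rr F y)) has_real_derivative (- (D * inverse (rr F s ^ Suc (Suc 0))))) (at s within S)"
    by (rule DERIV_inverse_fun[OF assms]) (use rr_pos[of s] in simp)
  have 2: "(\<lambda>y. inverse (rr F y)) = rho" using rho_rr by auto
  have 3: "- (D * inverse (rr F s ^ Suc (Suc 0))) = - D * (rho s)\<^sup>2"
    using rho_rr[of s] by (simp add: power2_eq_square power_inverse)
  show ?thesis using 1 unfolding 2 3 .
qed

end

lemma right_deriv_nonneg:
  fixes k :: "real \<Rightarrow> real"
  assumes "(k has_real_derivative D) (at_right s)" "\<eta> > 0" "\<And>y. s < y \<Longrightarrow> y < s + \<eta> \<Longrightarrow> k y \<ge> k s"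
  shows "D \<ge> 0"
proof -
  have lim: "((\<lambda>y. (k y - k s) / (y - s)) \<longlongrightarrow> D) (at_right s)"
    using assms(1) has_field_derivative_iff by blast
  have "eventually (\<lambda>y. (k y - k s) / (y - s) \<ge> 0) (at_right s)"
  proof (rule eventually_at_rightI[of s "s + \<eta>"])
    fix y assume "y \<in> {s<..<s + \<eta>}"
    thus "(k y - k s) / (y - s) \<ge> 0" using assms(3)[of y] by auto
  qed (use assms(2) in simp)
  thus ?thesis using tendsto_lowerbound[OF lim] by simp
qed

lemma left_deriv_nonpos:
  fixes k :: "real \<Rightarrow> real"
  assumes "(k has_real_derivative D) (at_left s)" "\<eta> > 0" "\<And>y. s - \<eta> < y \<Longrightarrow> y < s \<Longrightarrow> k y \<ge> k s"
  shows "D \<le> 0"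
proof -
  have lim: "((\<lambda>y. (k y - k s) / (y - s)) \<longlongrightarrow> D) (at_left s)"
    using assms(1) has_field_derivative_iff by blast
  have "eventually (\<lambda>y. (k y - k s) / (y - s) \<le> 0) (at_left s)"
  proof (rule eventually_at_leftI[of "s - \<eta>" s])
    fix y assume "y \<in> {s - \<eta><..<s}"
    thus "(k y - k s) / (y - s) \<le> 0" using assms(3)[of y] by (auto intro: divide_nonneg_neg)
  qed (use assms(2) in simp)
  thus ?thesis using tendsto_upperbound[OF lim] by simp
qed

context nrm begin

lemma validR1:
  assumes rhoR: "(rho has_real_derivative Rr) (at_right s)" and g: "s < \<gamma>" "\<gamma> < s + pi"
  shows "rho s * cos (\<gamma> - s) + Rr * sin (\<gamma> - s) \<le> rho \<gamma>"
proof -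
  define k where "k y = rho s * sin (\<gamma> - y) + rho \<gamma> * sin (y - s) - rho y * sin (\<gamma> - s)" for y
  have der: "(k has_real_derivative (- rho s * cos (\<gamma> - s) + rho \<gamma> - Rr * sin (\<gamma> - s))) (at_right s)"
    unfolding k_def by (auto intro!: derivative_eq_intros rhoR)
  have "0 \<le> - rho s * cos (\<gamma> - s) + rho \<gamma> - Rr * sin (\<gamma> - s)"
  proof (rule right_deriv_nonneg[OF der, of "\<gamma> - s"])
    show "\<gamma> - s > 0" using g by simp
    fix y assume y: "s < y" "y < s + (\<gamma> - s)"
    have "rho y * sin (\<gamma> - s) \<le> rho s * sin (\<gamma> - y) + rho \<gamma> * sin (y - s)"
      by (rule trip) (use y g in \<open>auto intro!: sin_ge_zero\<close>)
    thus "k s \<le> k y" unfolding k_def by simp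
  qed
  thus ?thesis by simp
qed

lemma validR2:
  assumes rhoR: "(rho has_real_derivative Rr) (at_right s)" and g: "\<gamma> < s" "s - pi < \<gamma>"
  shows "rho s * cos (\<gamma> - s) + Rr * sin (\<gamma> - s) \<le> rho \<gamma>"
proof -
  define k where "k y = rho \<gamma> * sin (y - s) + rho y * sin (s - \<gamma>) - rho s * sin (y - \<gamma>)" for y
  have der: "(k has_real_derivative (rho \<gamma> + Rr * sin (s - \<gamma>) - rho s * cos (s - \<gamma>))) (at_right s)"
    unfolding k_def by (auto intro!: derivative_eq_intros rhoR)
  have "0 \<le> rho \<gamma> + Rr * sin (s - \<gamma>) - rho s * cos (s - \<gamma>)"
  proof (rule right_deriv_nonneg[OF der, of "\<gamma> + pi - s"])
    show "\<gamma> + pi - s > 0" using g by simp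
    fix y assume y: "s < y" "y < s + (\<gamma> + pi - s)"
    have "rho s * sin (y - \<gamma>) \<le> rho \<gamma> * sin (y - s) + rho y * sin (s - \<gamma>)"
      by (rule trip) (use y g in \<open>auto intro!: sin_ge_zero\<close>)
    thus "k s \<le> k y" unfolding k_def by simp
  qed
  moreover have "cos (s - \<gamma>) = cos (\<gamma> - s)" "sin (s - \<gamma>) = - sin (\<gamma> - s)"
    by (simp_all add: cos_diff sin_diff mult.commute)
  ultimately show ?thesis by simp
qed

lemma validL1:
  assumes rhoL: "(rho has_real_derivative Rl) (at_left s)" and g: "s < \<gamma>" "\<gamma> < s + pi"
  shows "rho s * cos (\<gamma> - s) + Rl * sin (\<gamma> - s) \<le> rho \<gamma>"
proof -
  define k where "k y = rho y * sin (\<gamma> - s) + rho \<gamma> * sin (s - y) - rho s * sin (\<gamma> - y)" for y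
  have der: "(k has_real_derivative (Rl * sin (\<gamma> - s) - rho \<gamma> + rho s * cos (\<gamma> - s))) (at_left s)"
    unfolding k_def by (auto intro!: derivative_eq_intros rhoL)
  have "Rl * sin (\<gamma> - s) - rho \<gamma> + rho s * cos (\<gamma> - s) \<le> 0"
  proof (rule left_deriv_nonpos[OF der, of pi])
    show "pi > 0" by simp
    fix y assume y: "s - pi < y" "y < s"
    have "rho s * sin (\<gamma> - y) \<le> rho y * sin (\<gamma> - s) + rho \<gamma> * sin (s - y)"
      by (rule trip) (use y g in \<open>auto intro!: sin_ge_zero\<close>)
    thus "k s \<le> k y" unfolding k_def by simp
  qed
  thus ?thesis by simp
qed

lemma validL2:
  assumes rhoL: "(rho has_real_derivative Rl) (at_left s)" and g: "\<gamma> < s" "s - pi < \<gamma>"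
  shows "rho s * cos (\<gamma> - s) + Rl * sin (\<gamma> - s) \<le> rho \<gamma>"
proof -
  define k where "k y = rho \<gamma> * sin (s - y) + rho s * sin (y - \<gamma>) - rho y * sin (s - \<gamma>)" for y
  have der: "(k has_real_derivative (- rho \<gamma> + rho s * cos (s - \<gamma>) - Rl * sin (s - \<gamma>))) (at_left s)"
    unfolding k_def by (auto intro!: derivative_eq_intros rhoL)
  have "- rho \<gamma> + rho s * cos (s - \<gamma>) - Rl * sin (s - \<gamma>) \<le> 0"
  proof (rule left_deriv_nonpos[OF der, of "s - \<gamma>"])
    show "s - \<gamma> > 0" using g by simp
    fix y assume y: "s - (s - \<gamma>) < y" "y < s"
    have "rho y * sin (s - \<gamma>) \<le> rho \<gamma> * sin (s - y) + rho s * sin (y - \<gamma>)"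
      by (rule trip) (use y g in \<open>auto intro!: sin_ge_zero\<close>)
    thus "k s \<le> k y" unfolding k_def by simp
  qed
  moreover have "cos (s - \<gamma>) = cos (\<gamma> - s)" "sin (s - \<gamma>) = - sin (\<gamma> - s)"
    by (simp_all add: cos_diff sin_diff mult.commute)
  ultimately show ?thesis by simp
qed

lemma valid:
  assumes rp: "is_rprime F s d" and g: "\<bar>\<gamma> - s\<bar> < pi"
  shows "rho s * cos (\<gamma> - s) + (- d * (rho s)\<^sup>2) * sin (\<gamma> - s) \<le> rho \<gamma>"
proof -
  obtain dl dr where dl: "(rr F has_real_derivative dl) (at_left s)"
    and dr: "(rr F has_real_derivative dr) (at_right s)" and d: "min dl dr \<le> d" "d \<le> max dl dr"
    using rp unfolding is_rprime_def by blast
  define Rl where "Rl = - dl * (rho s)\<^sup>2"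
  define Rr where "Rr = - dr * (rho s)\<^sup>2"
  define \<delta> where "\<delta> = - d * (rho s)\<^sup>2"
  have rL: "(rho has_real_derivative Rl) (at_left s)" unfolding Rl_def by (rule rho_deriv[OF dl])
  have rR: "(rho has_real_derivative Rr) (at_right s)" unfolding Rr_def by (rule rho_deriv[OF dr])
  have sq: "(rho s)\<^sup>2 \<ge> 0" by simp
  have A: "\<delta> \<le> Rl \<or> \<delta> \<le> Rr"
  proof (cases "dl \<le> dr")
    case True
    hence "dl \<le> d" using d by simp
    hence "\<delta> \<le> Rl" unfolding \<delta>_def Rl_def using sq by (simp add: mult_right_mono)
    thus ?thesis by simp
  next
    case False
    hence "dr \<le> d" using d by simp
    hence "\<delta> \<le> Rr" unfolding \<delta>_def Rr_def using sq by (simp add: mult_right_mono)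
    thus ?thesis by simp
  qed
  have B: "\<delta> \<ge> Rl \<or> \<delta> \<ge> Rr"
  proof (cases "dl \<le> dr")
    case True
    hence "d \<le> dr" using d by simp
    hence "\<delta> \<ge> Rr" unfolding \<delta>_def Rr_def using sq by (simp add: mult_right_mono)
    thus ?thesis by simp
  next
    case False
    hence "d \<le> dl" using d by simp
    hence "\<delta> \<ge> Rl" unfolding \<delta>_def Rl_def using sq by (simp add: mult_right_mono)
    thus ?thesis by simp
  qed
  consider "\<gamma> = s" | "s < \<gamma>" | "\<gamma> < s" by linarith
  hence "rho s * cos (\<gamma> - s) + \<delta> * sin (\<gamma> - s) \<le> rho \<gamma>"
  proof cases
    case 1 thus ?thesis by simp
  next
    case 2
    hence g2: "\<gamma> < s + pi" using g by simp
    have si: "sin (\<gamma> - s) \<ge> 0" using 2 g2 by (intro sin_ge_zero) auto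
    from A show ?thesis
    proof
      assume "\<delta> \<le> Rl"
      hence "\<delta> * sin (\<gamma> - s) \<le> Rl * sin (\<gamma> - s)" using si by (rule mult_right_mono)
      thus ?thesis using validL1[OF rL 2 g2] by linarith
    next
      assume "\<delta> \<le> Rr"
      hence "\<delta> * sin (\<gamma> - s) \<le> Rr * sin (\<gamma> - s)" using si by (rule mult_right_mono)
      thus ?thesis using validR1[OF rR 2 g2] by linarith
    qed
  next
    case 3
    hence g2: "s - pi < \<gamma>" using g by simp
    have "sin (s - \<gamma>) \<ge> 0" using 3 g2 by (intro sin_ge_zero) auto
    moreover have "sin (s - \<gamma>) = - sin (\<gamma> - s)" by (simp add: sin_diff)
    ultimately have si: "sin (\<gamma> - s) \<le> 0" by simp
    from B show ?thesis
    proof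
      assume "\<delta> \<ge> Rl"
      hence "\<delta> * sin (\<gamma> - s) \<le> Rl * sin (\<gamma> - s)" using si by (rule mult_right_mono_neg)
      thus ?thesis using validL2[OF rL 3 g2] by linarith
    next
      assume "\<delta> \<ge> Rr"
      hence "\<delta> * sin (\<gamma> - s) \<le> Rr * sin (\<gamma> - s)" using si by (rule mult_right_mono_neg)
      thus ?thesis using validR2[OF rR 3 g2] by linarith
    qed
  qed
  thus ?thesis unfolding \<delta>_def .
qed

end

lemma sin_lip: "\<bar>sin a - sin b\<bar> \<le> \<bar>a - (b::real)\<bar>"
proof -
  have s1: "\<bar>sin ((a - b) / 2)\<bar> \<le> \<bar>a - b\<bar> / 2" using abs_sin_x_le_abs_x[of "(a - b) / 2"] by simp
  have "\<bar>sin ((a - b) / 2)\<bar> * \<bar>cos ((a + b) / 2)\<bar> \<le> \<bar>sin ((a - b) / 2)\<bar>"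
    using mult_left_mono[OF abs_cos_le_one[of "(a + b) / 2"], of "\<bar>sin ((a - b) / 2)\<bar>"] by simp
  moreover have "\<bar>sin a - sin b\<bar> = 2 * (\<bar>sin ((a - b) / 2)\<bar> * \<bar>cos ((a + b) / 2)\<bar>)"
    by (simp add: sin_diff_sin abs_mult)
  ultimately show ?thesis using s1 by linarith
qed

lemma cos_lip: "\<bar>cos a - cos b\<bar> \<le> \<bar>a - (b::real)\<bar>"
proof -
  have s1: "\<bar>sin ((b - a) / 2)\<bar> \<le> \<bar>a - b\<bar> / 2" using abs_sin_x_le_abs_x[of "(b - a) / 2"] by (simp add: abs_minus_commute)
  have "\<bar>sin ((a + b) / 2)\<bar> * \<bar>sin ((b - a) / 2)\<bar> \<le> \<bar>sin ((b - a) / 2)\<bar>"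
    using mult_right_mono[OF abs_sin_le_one[of "(a + b) / 2"], of "\<bar>sin ((b - a) / 2)\<bar>"] by simp
  moreover have "\<bar>cos a - cos b\<bar> = 2 * (\<bar>sin ((a + b) / 2)\<bar> * \<bar>sin ((b - a) / 2)\<bar>)"
    by (simp add: cos_diff_cos abs_mult)
  ultimately show ?thesis using s1 by linarith
qed

lemma sin_window_right: fixes x :: real shows "\<exists>\<eta>>0. \<eta> < pi \<and> ((\<forall>y. x \<le> y \<and> y \<le> x + \<eta> \<longrightarrow> sin y \<ge> 0) \<or> (\<forall>y. x \<le> y \<and> y \<le> x + \<eta> \<longrightarrow> sin y \<le> 0))"
proof (cases "sin x = 0")
  case True
  have e: "sin y = cos x * sin (y - x)" for y
    using sin_add[of x "y - x"] True by simp
  have s: "x \<le> y \<Longrightarrow> y \<le> x + pi/2 \<Longrightarrow> sin (y - x) \<ge> 0" for y by (intro sin_ge_zero) auto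
  show ?thesis
  proof (cases "cos x \<ge> 0")
    case True
    hence "\<forall>y. x \<le> y \<and> y \<le> x + pi/2 \<longrightarrow> sin y \<ge> 0" using e s by (metis mult_nonneg_nonneg)
    thus ?thesis by (intro exI[of _ "pi/2"]) auto
  next
    case False
    hence "\<forall>y. x \<le> y \<and> y \<le> x + pi/2 \<longrightarrow> sin y \<le> 0" using e s by (metis mult_nonpos_nonneg not_le less_imp_le)
    thus ?thesis by (intro exI[of _ "pi/2"]) auto
  qed
next
  case False
  hence sx: "sin x \<noteq> 0" .
  define \<eta> where "\<eta> = min (\<bar>sin x\<bar> / 2) 1"
  have \<eta>: "\<eta> > 0" "\<eta> < pi" "\<eta> < \<bar>sin x\<bar>" unfolding \<eta>_def using False pi_gt3 by auto
  have c: "x \<le> y \<Longrightarrow> y \<le> x + \<eta> \<Longrightarrow> \<bar>sin y - sin x\<bar> < \<bar>sin x\<bar>" for y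
    using sin_lip[of y x] \<eta> by linarith
  show ?thesis
  proof (cases "sin x > 0")
    case True
    have "\<forall>y. x \<le> y \<and> y \<le> x + \<eta> \<longrightarrow> sin y \<ge> 0"
    proof (intro allI impI)
      fix y assume "x \<le> y \<and> y \<le> x + \<eta>"
      hence "\<bar>sin y - sin x\<bar> < sin x" using c[of y] True by simp
      thus "sin y \<ge> 0" by (simp add: abs_less_iff)
    qed
    thus ?thesis using \<eta> by blast
  next
    case False
    have "\<forall>y. x \<le> y \<and> y \<le> x + \<eta> \<longrightarrow> sin y \<le> 0"
    proof (intro allI impI)
      fix y assume "x \<le> y \<and> y \<le> x + \<eta>"
      hence "\<bar>sin y - sin x\<bar> < - sin x" using c[of y] False sx by simp
      thus "sin y \<le> 0" by (simp add: abs_less_iff)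
    qed
    thus ?thesis using \<eta> by blast
  qed
qed

lemma sin_window_left: fixes x :: real shows "\<exists>\<eta>>0. \<eta> < pi \<and> ((\<forall>y. x - \<eta> \<le> y \<and> y \<le> x \<longrightarrow> sin y \<ge> 0) \<or> (\<forall>y. x - \<eta> \<le> y \<and> y \<le> x \<longrightarrow> sin y \<le> 0))"
proof (cases "sin x = 0")
  case True
  have e: "sin y = - cos x * sin (x - y)" for y
    using sin_diff[of x "x - y"] True by simp
  have s: "x - pi/2 \<le> y \<Longrightarrow> y \<le> x \<Longrightarrow> sin (x - y) \<ge> 0" for y by (intro sin_ge_zero) auto
  show ?thesis
  proof (cases "cos x \<ge> 0")
    case True
    hence "\<forall>y. x - pi/2 \<le> y \<and> y \<le> x \<longrightarrow> sin y \<le> 0" using e s by (metis mult_nonneg_nonneg neg_le_0_iff_le mult_minus_left)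
    thus ?thesis by (intro exI[of _ "pi/2"]) auto
  next
    case False
    hence "\<forall>y. x - pi/2 \<le> y \<and> y \<le> x \<longrightarrow> sin y \<ge> 0" using e s by (metis mult_nonpos_nonneg not_le less_imp_le neg_0_le_iff_le mult_minus_left)
    thus ?thesis by (intro exI[of _ "pi/2"]) auto
  qed
next
  case False
  hence sx: "sin x \<noteq> 0" .
  define \<eta> where "\<eta> = min (\<bar>sin x\<bar> / 2) 1"
  have \<eta>: "\<eta> > 0" "\<eta> < pi" "\<eta> < \<bar>sin x\<bar>" unfolding \<eta>_def using False pi_gt3 by auto
  have c: "x - \<eta> \<le> y \<Longrightarrow> y \<le> x \<Longrightarrow> \<bar>sin y - sin x\<bar> < \<bar>sin x\<bar>" for y
    using sin_lip[of y x] \<eta> by linarith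
  show ?thesis
  proof (cases "sin x > 0")
    case True
    have "\<forall>y. x - \<eta> \<le> y \<and> y \<le> x \<longrightarrow> sin y \<ge> 0"
    proof (intro allI impI)
      fix y assume "x - \<eta> \<le> y \<and> y \<le> x"
      hence "\<bar>sin y - sin x\<bar> < sin x" using c[of y] True by simp
      thus "sin y \<ge> 0" by (simp add: abs_less_iff)
    qed
    thus ?thesis using \<eta> by blast
  next
    case False
    have "\<forall>y. x - \<eta> \<le> y \<and> y \<le> x \<longrightarrow> sin y \<le> 0"
    proof (intro allI impI)
      fix y assume "x - \<eta> \<le> y \<and> y \<le> x"
      hence "\<bar>sin y - sin x\<bar> < - sin x" using c[of y] False sx by simp
      thus "sin y \<le> 0" by (simp add: abs_less_iff)
    qed
    thus ?thesis using \<eta> by blast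
  qed
qed

context nrm begin

lemma mm_le_CC: "mm \<le> CC"
proof -
  have "mm * norm ((1::real),(0::real)) \<le> F (1,0)" by (rule mm(2))
  moreover have "F (1,0) \<le> CC * norm ((1::real),(0::real))" by (rule CC(2))
  ultimately show ?thesis by (simp add: norm_Pair)
qed

definition eta0 where "eta0 = 1 / (4 * CC * RR)"

lemma eta0: "eta0 > 0" "eta0 \<le> 1/4"
proof -
  show "eta0 > 0" unfolding eta0_def using CC(1) RR by simp
  have "CC * RR \<ge> 1" unfolding RR_def using mm_le_CC mm(1) by (simp add: field_simps)
  thus "eta0 \<le> 1/4" unfolding eta0_def using CC(1) RR by (simp add: field_simps)
qed

lemma u1_eq: "u1fun F s d = rho s * cos s - (- d * (rho s)\<^sup>2) * sin s"
  unfolding u1fun_def rr_eq using rho_pos[of s] by (simp add: field_simps power2_eq_square)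

lemma cmp:
  assumes rp: "is_rprime F s d" and gs: "\<bar>\<gamma> - s\<bar> \<le> eta0"
  shows "\<exists>q>0. (sin \<gamma> \<ge> 0 \<longrightarrow> rr F \<gamma> * sin \<gamma> \<le> rr F s * sin s + q * (u1fun F s d * sin (\<gamma> - s)))
             \<and> (sin \<gamma> \<le> 0 \<longrightarrow> rr F \<gamma> * sin \<gamma> \<ge> rr F s * sin s + q * (u1fun F s d * sin (\<gamma> - s)))"
proof -
  define \<delta> where "\<delta> = - d * (rho s)\<^sup>2"
  define P where "P = rho s * cos (\<gamma> - s) + \<delta> * sin (\<gamma> - s)"
  define a where "a = u1fun F s d"
  have a: "a = rho s * cos s - \<delta> * sin s" unfolding a_def \<delta>_def by (rule u1_eq)
  have pi4: "pi / 4 < pi" "eta0 < pi" using eta0 pi_gt3 by auto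
  have Pl: "P \<le> rho \<gamma>" unfolding P_def \<delta>_def
    by (rule valid[OF rp]) (use gs pi4 in linarith)
  have d1: "\<delta> \<le> RR"
  proof -
    have "rho s * cos (s + pi/2 - s) + \<delta> * sin (s + pi/2 - s) \<le> rho (s + pi/2)" unfolding \<delta>_def
      by (rule valid[OF rp]) simp
    thus ?thesis using rho_le[of "s + pi/2"] by simp
  qed
  have d2: "- \<delta> \<le> RR"
  proof -
    have "rho s * cos (s - pi/2 - s) + \<delta> * sin (s - pi/2 - s) \<le> rho (s - pi/2)" unfolding \<delta>_def
      by (rule valid[OF rp]) simp
    thus ?thesis using rho_le[of "s - pi/2"] by simp
  qed
  have "\<bar>P - rho s\<bar> \<le> 1 / (2 * CC)"
  proof -
    have e: "P - rho s = rho s * (cos (\<gamma> - s) - cos 0) + \<delta> * (sin (\<gamma> - s) - sin 0)" unfolding P_def by (simp add: algebra_simps)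
    have "\<bar>P - rho s\<bar> \<le> \<bar>rho s * (cos (\<gamma> - s) - cos 0)\<bar> + \<bar>\<delta> * (sin (\<gamma> - s) - sin 0)\<bar>"
      unfolding e by (rule abs_triangle_ineq)
    also have "\<dots> = \<bar>rho s\<bar> * \<bar>cos (\<gamma> - s) - cos 0\<bar> + \<bar>\<delta>\<bar> * \<bar>sin (\<gamma> - s) - sin 0\<bar>"
      by (simp only: abs_mult)
    also have "\<dots> \<le> RR * \<bar>\<gamma> - s\<bar> + RR * \<bar>\<gamma> - s\<bar>"
    proof (intro add_mono mult_mono)
      show "\<bar>rho s\<bar> \<le> RR" using rho_le[of s] rho_pos[of s] by simp
      show "\<bar>\<delta>\<bar> \<le> RR" using d1 d2 by simp
      show "\<bar>cos (\<gamma> - s) - cos 0\<bar> \<le> \<bar>\<gamma> - s\<bar>" using cos_lip[of "\<gamma> - s" 0] by simp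
      show "\<bar>sin (\<gamma> - s) - sin 0\<bar> \<le> \<bar>\<gamma> - s\<bar>" using sin_lip[of "\<gamma> - s" 0] by simp
    qed (use RR in auto)
    also have "\<dots> \<le> 2 * RR * eta0" using gs RR by (simp add: mult_left_mono)
    also have "\<dots> = 1 / (2 * CC)" unfolding eta0_def using RR CC(1) by (simp add: field_simps)
    finally show ?thesis .
  qed
  hence "rho s - P \<le> 1 / (2 * CC)" by (simp add: abs_le_iff)
  moreover have "rho s \<ge> 1 / CC" by (rule rho_ge)
  moreover have "1 / (2 * CC) < 1 / CC" using CC(1) by (simp add: field_simps)
  ultimately have Ppos: "P > 0" by linarith
  have rs: "rho s > 0" by (rule rho_pos)
  have h: "sin \<gamma> = sin s * cos (\<gamma> - s) + cos s * sin (\<gamma> - s)"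
    using sin_add[of s "\<gamma> - s"] by simp
  have ident: "sin \<gamma> * rho s - sin s * P = a * sin (\<gamma> - s)"
    unfolding P_def a h by (simp add: algebra_simps)
  define q where "q = 1 / (P * rho s)"
  have q: "q > 0" unfolding q_def using Ppos rs by simp
  have "sin s / rho s + q * (a * sin (\<gamma> - s)) = (sin s * P + a * sin (\<gamma> - s)) / (P * rho s)"
    unfolding q_def using Ppos rs by (simp add: field_simps)
  also have "\<dots> = (sin \<gamma> * rho s) / (P * rho s)" using ident by (simp add: algebra_simps)
  also have "\<dots> = sin \<gamma> / P" using rs by simp
  finally have eq: "sin \<gamma> / P = sin s / rho s + q * (a * sin (\<gamma> - s))" by simp
  have rrg: "rr F \<gamma> * sin \<gamma> = sin \<gamma> / rho \<gamma>" "rr F s * sin s = sin s / rho s" by (simp_all add: rr_eq)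
  have A: "sin \<gamma> \<ge> 0 \<Longrightarrow> sin \<gamma> / rho \<gamma> \<le> sin \<gamma> / P"
    by (rule divide_left_mono) (use Pl Ppos rho_pos[of \<gamma>] in auto)
  have B: "sin \<gamma> \<le> 0 \<Longrightarrow> (- sin \<gamma>) / rho \<gamma> \<le> (- sin \<gamma>) / P"
    by (rule divide_left_mono) (use Pl Ppos rho_pos[of \<gamma>] in auto)
  have "(sin \<gamma> \<ge> 0 \<longrightarrow> rr F \<gamma> * sin \<gamma> \<le> rr F s * sin s + q * (a * sin (\<gamma> - s)))
             \<and> (sin \<gamma> \<le> 0 \<longrightarrow> rr F \<gamma> * sin \<gamma> \<ge> rr F s * sin s + q * (a * sin (\<gamma> - s)))"
    unfolding rrg eq[symmetric] using A B by auto
  thus ?thesis using q unfolding a_def by blast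
qed

end

lemma cont_near:
  fixes f :: "real \<Rightarrow> real"
  assumes "isCont f x" "e > 0"
  shows "\<exists>d>0. \<forall>y. \<bar>y - x\<bar> < d \<longrightarrow> \<bar>f y - f x\<bar> < e"
proof -
  have "f \<midarrow>x\<rightarrow> f x" using assms(1) by (simp add: isCont_def)
  from LIM_D[OF this assms(2)] obtain d where d: "d > 0" "\<forall>y. y \<noteq> x \<and> norm (y - x) < d \<longrightarrow> norm (f y - f x) < e"
    by blast
  have "\<forall>y. \<bar>y - x\<bar> < d \<longrightarrow> \<bar>f y - f x\<bar> < e"
  proof (intro allI impI)
    fix y assume "\<bar>y - x\<bar> < d"
    thus "\<bar>f y - f x\<bar> < e" using d assms(2) by (cases "y = x") auto
  qed
  thus ?thesis using d(1) by blast
qed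

context nrm begin

lemma g_isCont: "isCont (\<lambda>\<theta>. c * (rr F \<theta> * sin \<theta>)) x"
  using rr_isCont[of x] by (intro continuous_intros) auto

lemma part1:
  assumes p4: "\<phi>4 \<noteq> 0" and lt: "\<Theta>1 < \<Theta>2"
    and posG: "\<forall>s. \<Theta>1 < s \<and> s < \<Theta>2 \<longrightarrow> \<phi>4 * (rr F s * sin s) > \<phi>4 * (rr F \<Theta>1 * sin \<Theta>1)"
  shows "\<exists>\<epsilon>>0. \<forall>s d. \<Theta>1 < s \<and> s < \<Theta>2 \<and> s < \<Theta>1 + \<epsilon> \<and> is_rprime F s d \<longrightarrow> \<phi>4 * u1fun F s d > 0"
proof -
  define g where "g \<theta> = rr F \<theta> * sin \<theta>" for \<theta>
  obtain \<eta>w where \<eta>w: "\<eta>w > 0" "\<eta>w < pi"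
    and sw: "(\<forall>y. \<Theta>1 \<le> y \<and> y \<le> \<Theta>1 + \<eta>w \<longrightarrow> sin y \<ge> 0) \<or> (\<forall>y. \<Theta>1 \<le> y \<and> y \<le> \<Theta>1 + \<eta>w \<longrightarrow> sin y \<le> 0)"
    using sin_window_right[of \<Theta>1] by blast
  define \<eta> where "\<eta> = min (min \<eta>w eta0) ((\<Theta>2 - \<Theta>1) / 2)"
  have \<eta>: "\<eta> > 0" "\<eta> \<le> \<eta>w" "\<eta> \<le> eta0" "\<Theta>1 + \<eta> < \<Theta>2" "\<eta> < pi"
  proof -
    have "\<eta> \<le> (\<Theta>2 - \<Theta>1) / 2" unfolding \<eta>_def by (rule min.cobounded2)
    moreover have "\<eta> \<le> \<eta>w" "\<eta> \<le> eta0" unfolding \<eta>_def by auto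
    moreover have "\<eta> > 0" unfolding \<eta>_def using \<eta>w eta0 lt by auto
    ultimately show "\<eta> > 0" "\<eta> \<le> \<eta>w" "\<eta> \<le> eta0" "\<Theta>1 + \<eta> < \<Theta>2" "\<eta> < pi"
      using \<eta>w lt by auto
  qed
  define \<phi>0 where "\<phi>0 = \<Theta>1 + \<eta>"
  define e where "e = \<phi>4 * g \<phi>0 - \<phi>4 * g \<Theta>1"
  have "\<Theta>1 < \<phi>0 \<and> \<phi>0 < \<Theta>2" using \<eta> by (simp add: \<phi>0_def)
  hence "\<phi>4 * g \<phi>0 > \<phi>4 * g \<Theta>1" using posG[rule_format, of \<phi>0] unfolding g_def by simp
  hence e: "e > 0" unfolding e_def by simp
  have ic: "isCont (\<lambda>\<theta>. \<phi>4 * (rr F \<theta> * sin \<theta>)) \<Theta>1" by (rule g_isCont)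
  have "\<exists>d>0. \<forall>y. \<bar>y - \<Theta>1\<bar> < d \<longrightarrow> \<bar>\<phi>4 * (rr F y * sin y) - \<phi>4 * (rr F \<Theta>1 * sin \<Theta>1)\<bar> < e"
    by (rule cont_near[OF ic e])
  then obtain \<epsilon>0 where \<epsilon>0: "\<epsilon>0 > 0"
     "\<forall>y. \<bar>y - \<Theta>1\<bar> < \<epsilon>0 \<longrightarrow> \<bar>\<phi>4 * (rr F y * sin y) - \<phi>4 * (rr F \<Theta>1 * sin \<Theta>1)\<bar> < e"
    by blast
  define \<epsilon> where "\<epsilon> = min \<epsilon>0 \<eta>"
  have \<epsilon>: "\<epsilon> > 0" "\<epsilon> \<le> \<epsilon>0" "\<epsilon> \<le> \<eta>" unfolding \<epsilon>_def using \<epsilon>0 \<eta> by auto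
  have "\<forall>s d. \<Theta>1 < s \<and> s < \<Theta>2 \<and> s < \<Theta>1 + \<epsilon> \<and> is_rprime F s d \<longrightarrow> \<phi>4 * u1fun F s d > 0"
  proof (intro allI impI)
    fix s d assume H: "\<Theta>1 < s \<and> s < \<Theta>2 \<and> s < \<Theta>1 + \<epsilon> \<and> is_rprime F s d"
    hence rp: "is_rprime F s d" and s1: "\<Theta>1 < s" and s2: "s < \<Theta>1 + \<epsilon>" and s3: "s < \<Theta>2" by auto
    define a where "a = u1fun F s d"
    show "\<phi>4 * u1fun F s d > 0"
    proof (rule ccontr)
      assume "\<not> \<phi>4 * u1fun F s d > 0"
      hence na: "\<phi>4 * a \<le> 0" unfolding a_def by simp
      have Gs1: "\<phi>4 * g s > \<phi>4 * g \<Theta>1" using posG[rule_format, of s] s1 s3 unfolding g_def by simp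
      have "\<bar>s - \<Theta>1\<bar> < \<epsilon>0" using s1 s2 \<epsilon> by simp
      hence "\<bar>\<phi>4 * g s - \<phi>4 * g \<Theta>1\<bar> < e" using \<epsilon>0(2) unfolding g_def by blast
      hence Gs2: "\<phi>4 * g s < \<phi>4 * g \<phi>0" unfolding e_def by (simp add: abs_less_iff)
      have d0: "\<bar>\<phi>0 - s\<bar> \<le> eta0" using s1 s2 \<epsilon> \<eta> unfolding \<phi>0_def by auto
      have d1: "\<bar>\<Theta>1 - s\<bar> \<le> eta0" using s1 s2 \<epsilon> \<eta> by auto
      have sp0: "sin (\<phi>0 - s) > 0" using s1 s2 \<epsilon> \<eta> unfolding \<phi>0_def by (intro sin_gt_zero) auto
      have sp1: "sin (\<Theta>1 - s) < 0"
      proof -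
        have "sin (s - \<Theta>1) > 0" using s1 s2 \<epsilon> \<eta> by (intro sin_gt_zero) auto
        moreover have "sin (\<Theta>1 - s) = - sin (s - \<Theta>1)" by (metis minus_diff_eq sin_minus)
        ultimately show ?thesis by linarith
      qed
      obtain q0 where q0: "q0 > 0" "sin \<phi>0 \<ge> 0 \<longrightarrow> g \<phi>0 \<le> g s + q0 * (a * sin (\<phi>0 - s))"
        "sin \<phi>0 \<le> 0 \<longrightarrow> g \<phi>0 \<ge> g s + q0 * (a * sin (\<phi>0 - s))"
        using cmp[OF rp d0] unfolding g_def a_def by blast
      obtain q1 where q1: "q1 > 0" "sin \<Theta>1 \<ge> 0 \<longrightarrow> g \<Theta>1 \<le> g s + q1 * (a * sin (\<Theta>1 - s))"
        "sin \<Theta>1 \<le> 0 \<longrightarrow> g \<Theta>1 \<ge> g s + q1 * (a * sin (\<Theta>1 - s))"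
        using cmp[OF rp d1] unfolding g_def a_def by blast
      have w0: "\<Theta>1 \<le> \<phi>0 \<and> \<phi>0 \<le> \<Theta>1 + \<eta>w" "\<Theta>1 \<le> \<Theta>1 \<and> \<Theta>1 \<le> \<Theta>1 + \<eta>w"
        unfolding \<phi>0_def using \<eta> \<eta>w by auto
      consider "\<phi>4 > 0" | "\<phi>4 < 0" using p4 by linarith
      thus False
      proof cases
        case 1
        hence a: "a \<le> 0" using na by (simp add: mult_le_0_iff)
        from sw show False
        proof
          assume "\<forall>y. \<Theta>1 \<le> y \<and> y \<le> \<Theta>1 + \<eta>w \<longrightarrow> 0 \<le> sin y"
          hence "sin \<phi>0 \<ge> 0" using w0 by blast
          hence "g \<phi>0 \<le> g s + q0 * (a * sin (\<phi>0 - s))" using q0 by blast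
          moreover have "q0 * (a * sin (\<phi>0 - s)) \<le> 0"
            using q0(1) a sp0 by (simp add: mult_nonneg_nonpos mult_nonpos_nonneg)
          ultimately have "g \<phi>0 \<le> g s" by linarith
          hence "\<phi>4 * g \<phi>0 \<le> \<phi>4 * g s" using 1 by (simp add: mult_left_mono)
          thus False using Gs2 by linarith
        next
          assume "\<forall>y. \<Theta>1 \<le> y \<and> y \<le> \<Theta>1 + \<eta>w \<longrightarrow> sin y \<le> 0"
          hence "sin \<Theta>1 \<le> 0" using w0 by blast
          hence "g \<Theta>1 \<ge> g s + q1 * (a * sin (\<Theta>1 - s))" using q1 by blast
          moreover have "q1 * (a * sin (\<Theta>1 - s)) \<ge> 0"
            using q1(1) a sp1 by (simp add: mult_nonpos_nonpos)
          ultimately have "g \<Theta>1 \<ge> g s" by linarith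
          hence "\<phi>4 * g \<Theta>1 \<ge> \<phi>4 * g s" using 1 by (simp add: mult_left_mono)
          thus False using Gs1 by linarith
        qed
      next
        case 2
        hence a: "a \<ge> 0" using na by (simp add: mult_le_0_iff)
        from sw show False
        proof
          assume "\<forall>y. \<Theta>1 \<le> y \<and> y \<le> \<Theta>1 + \<eta>w \<longrightarrow> 0 \<le> sin y"
          hence "sin \<Theta>1 \<ge> 0" using w0 by blast
          hence "g \<Theta>1 \<le> g s + q1 * (a * sin (\<Theta>1 - s))" using q1 by blast
          moreover have "q1 * (a * sin (\<Theta>1 - s)) \<le> 0"
            using q1(1) a sp1 by (simp add: mult_nonneg_nonpos)
          ultimately have "g \<Theta>1 \<le> g s" by linarith
          hence "\<phi>4 * g \<Theta>1 \<ge> \<phi>4 * g s" using 2 by (simp add: mult_left_mono_neg)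
          thus False using Gs1 by linarith
        next
          assume "\<forall>y. \<Theta>1 \<le> y \<and> y \<le> \<Theta>1 + \<eta>w \<longrightarrow> sin y \<le> 0"
          hence "sin \<phi>0 \<le> 0" using w0 by blast
          hence "g \<phi>0 \<ge> g s + q0 * (a * sin (\<phi>0 - s))" using q0 by blast
          moreover have "q0 * (a * sin (\<phi>0 - s)) \<ge> 0"
            using q0(1) a sp0 by simp
          ultimately have "g \<phi>0 \<ge> g s" by linarith
          hence "\<phi>4 * g \<phi>0 \<le> \<phi>4 * g s" using 2 by (simp add: mult_left_mono_neg)
          thus False using Gs2 by linarith
        qed
      qed
    qed
  qed
  thus ?thesis using \<epsilon> by blast
qed

lemma part2:
  assumes p4: "\<phi>4 \<noteq> 0" and lt: "\<Theta>1 < \<Theta>2"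
    and posG: "\<forall>s. \<Theta>1 < s \<and> s < \<Theta>2 \<longrightarrow> \<phi>4 * (rr F s * sin s) > \<phi>4 * (rr F \<Theta>2 * sin \<Theta>2)"
  shows "\<exists>\<epsilon>>0. \<forall>s d. \<Theta>1 < s \<and> s < \<Theta>2 \<and> \<Theta>2 - \<epsilon> < s \<and> is_rprime F s d \<longrightarrow> \<phi>4 * u1fun F s d < 0"
proof -
  define g where "g \<theta> = rr F \<theta> * sin \<theta>" for \<theta>
  obtain \<eta>w where \<eta>w: "\<eta>w > 0" "\<eta>w < pi"
    and sw: "(\<forall>y. \<Theta>2 - \<eta>w \<le> y \<and> y \<le> \<Theta>2 \<longrightarrow> sin y \<ge> 0) \<or> (\<forall>y. \<Theta>2 - \<eta>w \<le> y \<and> y \<le> \<Theta>2 \<longrightarrow> sin y \<le> 0)"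
    using sin_window_left[of \<Theta>2] by blast
  define \<eta> where "\<eta> = min (min \<eta>w eta0) ((\<Theta>2 - \<Theta>1) / 2)"
  have \<eta>: "\<eta> > 0" "\<eta> \<le> \<eta>w" "\<eta> \<le> eta0" "\<Theta>1 + \<eta> < \<Theta>2" "\<eta> < pi"
  proof -
    have "\<eta> \<le> (\<Theta>2 - \<Theta>1) / 2" unfolding \<eta>_def by (rule min.cobounded2)
    moreover have "\<eta> \<le> \<eta>w" "\<eta> \<le> eta0" unfolding \<eta>_def by auto
    moreover have "\<eta> > 0" unfolding \<eta>_def using \<eta>w eta0 lt by auto
    ultimately show "\<eta> > 0" "\<eta> \<le> \<eta>w" "\<eta> \<le> eta0" "\<Theta>1 + \<eta> < \<Theta>2" "\<eta> < pi"
      using \<eta>w lt by auto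
  qed
  define \<phi>0 where "\<phi>0 = \<Theta>2 - \<eta>"
  define e where "e = \<phi>4 * g \<phi>0 - \<phi>4 * g \<Theta>2"
  have "\<Theta>1 < \<phi>0 \<and> \<phi>0 < \<Theta>2" using \<eta> by (simp add: \<phi>0_def)
  hence "\<phi>4 * g \<phi>0 > \<phi>4 * g \<Theta>2" using posG[rule_format, of \<phi>0] unfolding g_def by simp
  hence e: "e > 0" unfolding e_def by simp
  have ic: "isCont (\<lambda>\<theta>. \<phi>4 * (rr F \<theta> * sin \<theta>)) \<Theta>2" by (rule g_isCont)
  have "\<exists>d>0. \<forall>y. \<bar>y - \<Theta>2\<bar> < d \<longrightarrow> \<bar>\<phi>4 * (rr F y * sin y) - \<phi>4 * (rr F \<Theta>2 * sin \<Theta>2)\<bar> < e"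
    by (rule cont_near[OF ic e])
  then obtain \<epsilon>0 where \<epsilon>0: "\<epsilon>0 > 0"
     "\<forall>y. \<bar>y - \<Theta>2\<bar> < \<epsilon>0 \<longrightarrow> \<bar>\<phi>4 * (rr F y * sin y) - \<phi>4 * (rr F \<Theta>2 * sin \<Theta>2)\<bar> < e"
    by blast
  define \<epsilon> where "\<epsilon> = min \<epsilon>0 \<eta>"
  have \<epsilon>: "\<epsilon> > 0" "\<epsilon> \<le> \<epsilon>0" "\<epsilon> \<le> \<eta>" unfolding \<epsilon>_def using \<epsilon>0 \<eta> by auto
  have "\<forall>s d. \<Theta>1 < s \<and> s < \<Theta>2 \<and> \<Theta>2 - \<epsilon> < s \<and> is_rprime F s d \<longrightarrow> \<phi>4 * u1fun F s d < 0"
  proof (intro allI impI)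
    fix s d assume H: "\<Theta>1 < s \<and> s < \<Theta>2 \<and> \<Theta>2 - \<epsilon> < s \<and> is_rprime F s d"
    hence rp: "is_rprime F s d" and s1: "\<Theta>1 < s" and s2: "\<Theta>2 - \<epsilon> < s" and s3: "s < \<Theta>2" by auto
    define a where "a = u1fun F s d"
    show "\<phi>4 * u1fun F s d < 0"
    proof (rule ccontr)
      assume "\<not> \<phi>4 * u1fun F s d < 0"
      hence na: "\<phi>4 * a \<ge> 0" unfolding a_def by simp
      have Gs1: "\<phi>4 * g s > \<phi>4 * g \<Theta>2" using posG[rule_format, of s] s1 s3 unfolding g_def by simp
      have "\<bar>s - \<Theta>2\<bar> < \<epsilon>0" using s3 s2 \<epsilon> by simp
      hence "\<bar>\<phi>4 * g s - \<phi>4 * g \<Theta>2\<bar> < e" using \<epsilon>0(2) unfolding g_def by blast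
      hence Gs2: "\<phi>4 * g s < \<phi>4 * g \<phi>0" unfolding e_def by (simp add: abs_less_iff)
      have d0: "\<bar>\<phi>0 - s\<bar> \<le> eta0" using s3 s2 \<epsilon> \<eta> unfolding \<phi>0_def by auto
      have d1: "\<bar>\<Theta>2 - s\<bar> \<le> eta0" using s3 s2 \<epsilon> \<eta> by auto
      have sp1: "sin (\<Theta>2 - s) > 0" using s3 s2 \<epsilon> \<eta> by (intro sin_gt_zero) auto
      have sp0: "sin (\<phi>0 - s) < 0"
      proof -
        have "sin (s - \<phi>0) > 0" using s3 s2 \<epsilon> \<eta> unfolding \<phi>0_def by (intro sin_gt_zero) auto
        moreover have "sin (\<phi>0 - s) = - sin (s - \<phi>0)" by (metis minus_diff_eq sin_minus)
        ultimately show ?thesis by linarith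
      qed
      obtain q0 where q0: "q0 > 0" "sin \<phi>0 \<ge> 0 \<longrightarrow> g \<phi>0 \<le> g s + q0 * (a * sin (\<phi>0 - s))"
        "sin \<phi>0 \<le> 0 \<longrightarrow> g \<phi>0 \<ge> g s + q0 * (a * sin (\<phi>0 - s))"
        using cmp[OF rp d0] unfolding g_def a_def by blast
      obtain q1 where q1: "q1 > 0" "sin \<Theta>2 \<ge> 0 \<longrightarrow> g \<Theta>2 \<le> g s + q1 * (a * sin (\<Theta>2 - s))"
        "sin \<Theta>2 \<le> 0 \<longrightarrow> g \<Theta>2 \<ge> g s + q1 * (a * sin (\<Theta>2 - s))"
        using cmp[OF rp d1] unfolding g_def a_def by blast
      have w0: "\<Theta>2 - \<eta>w \<le> \<phi>0 \<and> \<phi>0 \<le> \<Theta>2" "\<Theta>2 - \<eta>w \<le> \<Theta>2 \<and> \<Theta>2 \<le> \<Theta>2"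
        unfolding \<phi>0_def using \<eta> \<eta>w by auto
      consider "\<phi>4 > 0" | "\<phi>4 < 0" using p4 by linarith
      thus False
      proof cases
        case 1
        hence a: "a \<ge> 0" using na by (simp add: zero_le_mult_iff)
        from sw show False
        proof
          assume "\<forall>y. \<Theta>2 - \<eta>w \<le> y \<and> y \<le> \<Theta>2 \<longrightarrow> 0 \<le> sin y"
          hence "sin \<phi>0 \<ge> 0" using w0 by blast
          hence "g \<phi>0 \<le> g s + q0 * (a * sin (\<phi>0 - s))" using q0 by blast
          moreover have "q0 * (a * sin (\<phi>0 - s)) \<le> 0"
            using q0(1) a sp0 by (simp add: mult_nonneg_nonpos)
          ultimately have "g \<phi>0 \<le> g s" by linarith
          hence "\<phi>4 * g \<phi>0 \<le> \<phi>4 * g s" using 1 by (simp add: mult_left_mono)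
          thus False using Gs2 by linarith
        next
          assume "\<forall>y. \<Theta>2 - \<eta>w \<le> y \<and> y \<le> \<Theta>2 \<longrightarrow> sin y \<le> 0"
          hence "sin \<Theta>2 \<le> 0" using w0 by blast
          hence "g \<Theta>2 \<ge> g s + q1 * (a * sin (\<Theta>2 - s))" using q1 by blast
          moreover have "q1 * (a * sin (\<Theta>2 - s)) \<ge> 0"
            using q1(1) a sp1 by simp
          ultimately have "g \<Theta>2 \<ge> g s" by linarith
          hence "\<phi>4 * g \<Theta>2 \<ge> \<phi>4 * g s" using 1 by (simp add: mult_left_mono)
          thus False using Gs1 by linarith
        qed
      next
        case 2
        hence a: "a \<le> 0" using na by (simp add: zero_le_mult_iff)
        from sw show False
        proof
          assume "\<forall>y. \<Theta>2 - \<eta>w \<le> y \<and> y \<le> \<Theta>2 \<longrightarrow> 0 \<le> sin y"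
          hence "sin \<Theta>2 \<ge> 0" using w0 by blast
          hence "g \<Theta>2 \<le> g s + q1 * (a * sin (\<Theta>2 - s))" using q1 by blast
          moreover have "q1 * (a * sin (\<Theta>2 - s)) \<le> 0"
            using q1(1) a sp1 by (simp add: mult_nonneg_nonpos mult_nonpos_nonneg)
          ultimately have "g \<Theta>2 \<le> g s" by linarith
          hence "\<phi>4 * g \<Theta>2 \<ge> \<phi>4 * g s" using 2 by (simp add: mult_left_mono_neg)
          thus False using Gs1 by linarith
        next
          assume "\<forall>y. \<Theta>2 - \<eta>w \<le> y \<and> y \<le> \<Theta>2 \<longrightarrow> sin y \<le> 0"
          hence "sin \<phi>0 \<le> 0" using w0 by blast
          hence "g \<phi>0 \<ge> g s + q0 * (a * sin (\<phi>0 - s))" using q0 by blast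
          moreover have "q0 * (a * sin (\<phi>0 - s)) \<ge> 0"
            using q0(1) a sp0 by (simp add: mult_nonpos_nonpos)
          ultimately have "g \<phi>0 \<ge> g s" by linarith
          hence "\<phi>4 * g \<phi>0 \<le> \<phi>4 * g s" using 2 by (simp add: mult_left_mono_neg)
          thus False using Gs2 by linarith
        qed
      qed
    qed
  qed
  thus ?thesis using \<epsilon> by blast
qed

end

lemma ac_int_swap:
  assumes "ac_sol X f" "a \<le> b"
  shows "(f has_integral (X b - X a)) {a..b}"
  using assms unfolding ac_sol_def by blast

lemma int_bound_real:
  fixes f :: "real \<Rightarrow> real"
  assumes "(f has_integral i) {a..b}" "a \<le> b" "\<And>x. x \<in> {a..b} \<Longrightarrow> \<bar>f x\<bar> \<le> B" "0 \<le> B"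
  shows "\<bar>i\<bar> \<le> B * (b - a)"
proof -
  have "(f has_integral i) (cbox a b)" using assms(1) by simp
  from has_integral_bound[OF assms(4) this] have "norm i \<le> B * (b - a)"
    using assms(2,3) by (simp add: content_real)
  thus ?thesis by simp
qed

lemma ac_lip:
  assumes "ac_sol X f" "\<And>t. \<bar>f t\<bar> \<le> B"
  shows "\<bar>X s - X t\<bar> \<le> B * \<bar>s - t\<bar>"
proof -
  have B: "0 \<le> B" using assms(2)[of 0] by linarith
  have *: "\<bar>X b - X a\<bar> \<le> B * (b - a)" if "a \<le> b" for a b
    by (rule int_bound_real[OF ac_int_swap[OF assms(1) that] that]) (use assms(2) B in auto)
  show ?thesis
  proof (cases "t \<le> s")
    case True thus ?thesis using *[OF True] by simp
  next
    case False thus ?thesis using *[of s t] by (simp add: abs_minus_commute)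
  qed
qed

lemma ac_zero:
  assumes "ac_sol X (\<lambda>t. 0)"
  shows "X s = X t"
proof -
  have *: "X b = X a" if "a \<le> b" for a b
  proof -
    have "((\<lambda>t. 0::real) has_integral (X b - X a)) {a..b}" by (rule ac_int_swap[OF assms that])
    moreover have "((\<lambda>t. 0::real) has_integral 0) {a..b}" by (rule has_integral_0)
    ultimately show ?thesis using has_integral_unique by fastforce
  qed
  show ?thesis using *[of s t] *[of t s] by (cases "t \<le> s") auto
qed

lemma ac_scale:
  assumes "ac_sol X f" "ac_sol Y g" "\<And>t. f t = c * g t"
  shows "X s - X t = c * (Y s - Y t)"
proof -
  have *: "X b - X a = c * (Y b - Y a)" if "a \<le> b" for a b
  proof -
    have "(f has_integral (X b - X a)) {a..b}" by (rule ac_int_swap[OF assms(1) that])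
    moreover have "((\<lambda>t. c * g t) has_integral (c * (Y b - Y a))) {a..b}"
      by (rule has_integral_mult_right[OF ac_int_swap[OF assms(2) that]])
    ultimately show ?thesis using has_integral_unique assms(3) by (metis (no_types, lifting) ext)
  qed
  show ?thesis
  proof (cases "t \<le> s")
    case True thus ?thesis using * by simp
  next
    case False
    hence "X t - X s = c * (Y t - Y s)" using * by simp
    thus ?thesis by (simp add: algebra_simps)
  qed
qed

definition linz :: "(real \<Rightarrow> real) \<Rightarrow> (real \<Rightarrow> real) \<Rightarrow> (real \<Rightarrow> real) \<Rightarrow> real \<Rightarrow> real \<Rightarrow> real \<Rightarrow> bool" where
  "linz X Y f t A B \<longleftrightarrow> (\<exists>K. \<forall>s. \<bar>s - t\<bar> \<le> 1 \<longrightarrow> \<bar>f s - f t - A * (X s - X t) - B * (Y s - Y t)\<bar> \<le> K * (s - t)\<^sup>2)"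

lemma linz_X: "linz X Y X t 1 0"
  unfolding linz_def by (intro exI[of _ 0]) simp

lemma linz_Y: "linz X Y Y t 0 1"
  unfolding linz_def by (intro exI[of _ 0]) simp

lemma linz_const: "linz X Y (\<lambda>s. c) t 0 0"
  unfolding linz_def by (intro exI[of _ 0]) simp

lemma linz_add: "linz X Y f t A1 B1 \<Longrightarrow> linz X Y g t A2 B2 \<Longrightarrow> linz X Y (\<lambda>s. f s + g s) t (A1 + A2) (B1 + B2)"
proof -
  assume "linz X Y f t A1 B1" "linz X Y g t A2 B2"
  then obtain K1 K2 where
    k1: "\<forall>s. \<bar>s - t\<bar> \<le> 1 \<longrightarrow> \<bar>f s - f t - A1 * (X s - X t) - B1 * (Y s - Y t)\<bar> \<le> K1 * (s - t)\<^sup>2" and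
    k2: "\<forall>s. \<bar>s - t\<bar> \<le> 1 \<longrightarrow> \<bar>g s - g t - A2 * (X s - X t) - B2 * (Y s - Y t)\<bar> \<le> K2 * (s - t)\<^sup>2"
    unfolding linz_def by blast
  have "\<forall>s. \<bar>s - t\<bar> \<le> 1 \<longrightarrow> \<bar>(f s + g s) - (f t + g t) - (A1 + A2) * (X s - X t) - (B1 + B2) * (Y s - Y t)\<bar> \<le> (K1 + K2) * (s - t)\<^sup>2"
  proof (intro allI impI)
    fix s assume s: "\<bar>s - t\<bar> \<le> 1"
    have "(f s + g s) - (f t + g t) - (A1 + A2) * (X s - X t) - (B1 + B2) * (Y s - Y t)
      = (f s - f t - A1 * (X s - X t) - B1 * (Y s - Y t)) + (g s - g t - A2 * (X s - X t) - B2 * (Y s - Y t))"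
      by (simp add: algebra_simps)
    thus "\<bar>(f s + g s) - (f t + g t) - (A1 + A2) * (X s - X t) - (B1 + B2) * (Y s - Y t)\<bar> \<le> (K1 + K2) * (s - t)\<^sup>2"
      using k1[rule_format, OF s] k2[rule_format, OF s] by (simp add: algebra_simps)
  qed
  thus ?thesis unfolding linz_def by blast
qed

lemma linz_cmult: "linz X Y f t A B \<Longrightarrow> linz X Y (\<lambda>s. c * f s) t (c * A) (c * B)"
proof -
  assume "linz X Y f t A B"
  then obtain K where
    k: "\<forall>s. \<bar>s - t\<bar> \<le> 1 \<longrightarrow> \<bar>f s - f t - A * (X s - X t) - B * (Y s - Y t)\<bar> \<le> K * (s - t)\<^sup>2"
    unfolding linz_def by blast
  have "\<forall>s. \<bar>s - t\<bar> \<le> 1 \<longrightarrow> \<bar>c * f s - c * f t - (c * A) * (X s - X t) - (c * B) * (Y s - Y t)\<bar> \<le> (\<bar>c\<bar> * K) * (s - t)\<^sup>2"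
  proof (intro allI impI)
    fix s assume s: "\<bar>s - t\<bar> \<le> 1"
    have "c * f s - c * f t - (c * A) * (X s - X t) - (c * B) * (Y s - Y t) = c * (f s - f t - A * (X s - X t) - B * (Y s - Y t))"
      by (simp add: algebra_simps)
    hence "\<bar>c * f s - c * f t - (c * A) * (X s - X t) - (c * B) * (Y s - Y t)\<bar> = \<bar>c\<bar> * \<bar>f s - f t - A * (X s - X t) - B * (Y s - Y t)\<bar>"
      by (simp add: abs_mult)
    also have "\<dots> \<le> \<bar>c\<bar> * (K * (s - t)\<^sup>2)" using k[rule_format, OF s] by (simp add: mult_left_mono)
    finally show "\<bar>c * f s - c * f t - (c * A) * (X s - X t) - (c * B) * (Y s - Y t)\<bar> \<le> (\<bar>c\<bar> * K) * (s - t)\<^sup>2"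
      by (simp add: mult.assoc)
  qed
  thus ?thesis unfolding linz_def by blast
qed

lemma linz_cong: "linz X Y f t A B \<Longrightarrow> (\<And>s. f s = g s) \<Longrightarrow> linz X Y g t A B"
proof -
  assume "linz X Y f t A B" "\<And>s. f s = g s"
  moreover have "f = g" using calculation(2) by auto
  ultimately show ?thesis by simp
qed

lemma linz_coef: "linz X Y f t A' B' \<Longrightarrow> A' = A \<Longrightarrow> B' = B \<Longrightarrow> linz X Y f t A B"
  by simp

lemma linz_neg: "linz X Y f t A B \<Longrightarrow> linz X Y (\<lambda>s. - f s) t (- A) (- B)"
  using linz_cmult[of X Y f t A B "-1"] by simp

lemma linz_diff: "linz X Y f t A1 B1 \<Longrightarrow> linz X Y g t A2 B2 \<Longrightarrow> linz X Y (\<lambda>s. f s - g s) t (A1 - A2) (B1 - B2)"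
  using linz_add[of X Y f t A1 B1 "\<lambda>s. - g s" "- A2" "- B2"] linz_neg[of X Y g t A2 B2] by simp

lemma linz_div: "linz X Y f t A B \<Longrightarrow> linz X Y (\<lambda>s. f s / c) t (A / c) (B / c)"
  using linz_cmult[of X Y f t A B "1 / c"] by simp

locale lipXY =
  fixes X Y :: "real \<Rightarrow> real" and R :: real
  assumes R: "R \<ge> 0"
    and lipX: "\<And>s t. \<bar>X s - X t\<bar> \<le> R * \<bar>s - t\<bar>"
    and lipY: "\<And>s t. \<bar>Y s - Y t\<bar> \<le> R * \<bar>s - t\<bar>"
begin

lemma linz_lip:
  assumes "linz X Y f t A B"
  shows "\<exists>L\<ge>0. \<forall>s. \<bar>s - t\<bar> \<le> 1 \<longrightarrow> \<bar>f s - f t\<bar> \<le> L * \<bar>s - t\<bar>"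
proof -
  obtain K where
    k: "\<forall>s. \<bar>s - t\<bar> \<le> 1 \<longrightarrow> \<bar>f s - f t - A * (X s - X t) - B * (Y s - Y t)\<bar> \<le> K * (s - t)\<^sup>2"
    using assms unfolding linz_def by blast
  define L where "L = \<bar>A\<bar> * R + \<bar>B\<bar> * R + \<bar>K\<bar>"
  have "\<forall>s. \<bar>s - t\<bar> \<le> 1 \<longrightarrow> \<bar>f s - f t\<bar> \<le> L * \<bar>s - t\<bar>"
  proof (intro allI impI)
    fix s assume s: "\<bar>s - t\<bar> \<le> 1"
    have e1: "\<bar>A * (X s - X t)\<bar> \<le> \<bar>A\<bar> * R * \<bar>s - t\<bar>"
      using mult_left_mono[OF lipX[of s t], of "\<bar>A\<bar>"] by (simp add: abs_mult mult.assoc)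
    have e2: "\<bar>B * (Y s - Y t)\<bar> \<le> \<bar>B\<bar> * R * \<bar>s - t\<bar>"
      using mult_left_mono[OF lipY[of s t], of "\<bar>B\<bar>"] by (simp add: abs_mult mult.assoc)
    have "(s - t)\<^sup>2 \<le> \<bar>s - t\<bar>"
    proof -
      have "(s - t)\<^sup>2 = \<bar>s - t\<bar> * \<bar>s - t\<bar>" by (simp add: power2_eq_square abs_mult[symmetric])
      also have "\<dots> \<le> \<bar>s - t\<bar> * 1" using s by (intro mult_left_mono) auto
      finally show ?thesis by simp
    qed
    hence e3: "K * (s - t)\<^sup>2 \<le> \<bar>K\<bar> * \<bar>s - t\<bar>"
      by (smt (verit, ccfv_SIG) abs_ge_self mult_left_mono mult_right_mono zero_le_power2)
    have "\<bar>f s - f t\<bar> \<le> \<bar>f s - f t - A * (X s - X t) - B * (Y s - Y t)\<bar> + \<bar>A * (X s - X t)\<bar> + \<bar>B * (Y s - Y t)\<bar>"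
      by linarith
    also have "\<dots> \<le> \<bar>K\<bar> * \<bar>s - t\<bar> + \<bar>A\<bar> * R * \<bar>s - t\<bar> + \<bar>B\<bar> * R * \<bar>s - t\<bar>"
      using k[rule_format, OF s] e1 e2 e3 by linarith
    also have "\<dots> = L * \<bar>s - t\<bar>" unfolding L_def by (simp add: algebra_simps)
    finally show "\<bar>f s - f t\<bar> \<le> L * \<bar>s - t\<bar>" .
  qed
  moreover have "L \<ge> 0" unfolding L_def using R by simp
  ultimately show ?thesis by blast
qed

lemma linz_mult:
  assumes f: "linz X Y f t A1 B1" and g: "linz X Y g t A2 B2"
  shows "linz X Y (\<lambda>s. f s * g s) t (f t * A2 + g t * A1) (f t * B2 + g t * B1)"
proof -
  obtain K1 where
    k1: "\<forall>s. \<bar>s - t\<bar> \<le> 1 \<longrightarrow> \<bar>f s - f t - A1 * (X s - X t) - B1 * (Y s - Y t)\<bar> \<le> K1 * (s - t)\<^sup>2"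
    using f unfolding linz_def by blast
  obtain K2 where
    k2: "\<forall>s. \<bar>s - t\<bar> \<le> 1 \<longrightarrow> \<bar>g s - g t - A2 * (X s - X t) - B2 * (Y s - Y t)\<bar> \<le> K2 * (s - t)\<^sup>2"
    using g unfolding linz_def by blast
  obtain L1 where L1: "L1 \<ge> 0" "\<forall>s. \<bar>s - t\<bar> \<le> 1 \<longrightarrow> \<bar>f s - f t\<bar> \<le> L1 * \<bar>s - t\<bar>" using linz_lip[OF f] by blast
  obtain L2 where L2: "L2 \<ge> 0" "\<forall>s. \<bar>s - t\<bar> \<le> 1 \<longrightarrow> \<bar>g s - g t\<bar> \<le> L2 * \<bar>s - t\<bar>" using linz_lip[OF g] by blast
  define K where "K = \<bar>f t\<bar> * \<bar>K2\<bar> + \<bar>g t\<bar> * \<bar>K1\<bar> + L1 * L2"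
  have "\<forall>s. \<bar>s - t\<bar> \<le> 1 \<longrightarrow> \<bar>f s * g s - f t * g t - (f t * A2 + g t * A1) * (X s - X t) - (f t * B2 + g t * B1) * (Y s - Y t)\<bar> \<le> K * (s - t)\<^sup>2"
  proof (intro allI impI)
    fix s assume s: "\<bar>s - t\<bar> \<le> 1"
    define E1 where "E1 = f s - f t - A1 * (X s - X t) - B1 * (Y s - Y t)"
    define E2 where "E2 = g s - g t - A2 * (X s - X t) - B2 * (Y s - Y t)"
    have eq: "f s * g s - f t * g t - (f t * A2 + g t * A1) * (X s - X t) - (f t * B2 + g t * B1) * (Y s - Y t)
       = f t * E2 + g t * E1 + (f s - f t) * (g s - g t)"
      unfolding E1_def E2_def by (simp add: algebra_simps)
    have a1: "\<bar>f t * E2\<bar> \<le> \<bar>f t\<bar> * \<bar>K2\<bar> * (s - t)\<^sup>2"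
    proof -
      have "\<bar>E2\<bar> \<le> \<bar>K2\<bar> * (s - t)\<^sup>2" using k2[rule_format, OF s] unfolding E2_def
        by (smt (verit) abs_ge_self mult_right_mono zero_le_power2)
      thus ?thesis by (simp add: abs_mult mult_left_mono mult.assoc)
    qed
    have a2: "\<bar>g t * E1\<bar> \<le> \<bar>g t\<bar> * \<bar>K1\<bar> * (s - t)\<^sup>2"
    proof -
      have "\<bar>E1\<bar> \<le> \<bar>K1\<bar> * (s - t)\<^sup>2" using k1[rule_format, OF s] unfolding E1_def
        by (smt (verit) abs_ge_self mult_right_mono zero_le_power2)
      thus ?thesis by (simp add: abs_mult mult_left_mono mult.assoc)
    qed
    have a3: "\<bar>(f s - f t) * (g s - g t)\<bar> \<le> L1 * L2 * (s - t)\<^sup>2"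
    proof -
      have "\<bar>(f s - f t) * (g s - g t)\<bar> = \<bar>f s - f t\<bar> * \<bar>g s - g t\<bar>" by (simp add: abs_mult)
      also have "\<dots> \<le> (L1 * \<bar>s - t\<bar>) * (L2 * \<bar>s - t\<bar>)"
        using L1 L2 s by (intro mult_mono) auto
      also have "\<dots> = L1 * L2 * (s - t)\<^sup>2" by (simp add: power2_eq_square abs_mult[symmetric] algebra_simps)
      finally show ?thesis .
    qed
    have "\<bar>f t * E2 + g t * E1 + (f s - f t) * (g s - g t)\<bar> \<le> \<bar>f t * E2\<bar> + \<bar>g t * E1\<bar> + \<bar>(f s - f t) * (g s - g t)\<bar>"
      by linarith
    also have "\<dots> \<le> K * (s - t)\<^sup>2" unfolding K_def using a1 a2 a3 by (simp add: algebra_simps)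
    finally show "\<bar>f s * g s - f t * g t - (f t * A2 + g t * A1) * (X s - X t) - (f t * B2 + g t * B1) * (Y s - Y t)\<bar> \<le> K * (s - t)\<^sup>2"
      unfolding eq .
  qed
  thus ?thesis unfolding linz_def by blast
qed

end

context lipXY begin

lemma linz_int:
  assumes acP: "ac_sol P q" and acX: "ac_sol X f1" and acY: "ac_sol Y f2"
    and q: "\<And>\<sigma>. q \<sigma> = k1 \<sigma> * f1 \<sigma> + k2 \<sigma> * f2 \<sigma>"
    and bnd: "\<And>\<sigma>. \<bar>f1 \<sigma>\<bar> \<le> R" "\<And>\<sigma>. \<bar>f2 \<sigma>\<bar> \<le> R"
    and l1: "linz X Y k1 t A1 B1" and l2: "linz X Y k2 t A2 B2"
  shows "linz X Y P t (k1 t) (k2 t)"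
proof -
  obtain L1 where L1: "L1 \<ge> 0" "\<forall>s. \<bar>s - t\<bar> \<le> 1 \<longrightarrow> \<bar>k1 s - k1 t\<bar> \<le> L1 * \<bar>s - t\<bar>" using linz_lip[OF l1] by blast
  obtain L2 where L2: "L2 \<ge> 0" "\<forall>s. \<bar>s - t\<bar> \<le> 1 \<longrightarrow> \<bar>k2 s - k2 t\<bar> \<le> L2 * \<bar>s - t\<bar>" using linz_lip[OF l2] by blast
  define h where "h \<sigma> = q \<sigma> - k1 t * f1 \<sigma> - k2 t * f2 \<sigma>" for \<sigma>
  have hint: "(h has_integral (P b - P a - k1 t * (X b - X a) - k2 t * (Y b - Y a))) {a..b}" if "a \<le> b" for a b
    unfolding h_def
    by (intro has_integral_diff has_integral_mult_right ac_int_swap[OF acP that] ac_int_swap[OF acX that] ac_int_swap[OF acY that])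
  have hb: "\<bar>h \<sigma>\<bar> \<le> (L1 + L2) * R * \<bar>s - t\<bar>" if "\<bar>\<sigma> - t\<bar> \<le> \<bar>s - t\<bar>" "\<bar>s - t\<bar> \<le> 1" for \<sigma> s
  proof -
    have "h \<sigma> = (k1 \<sigma> - k1 t) * f1 \<sigma> + (k2 \<sigma> - k2 t) * f2 \<sigma>" unfolding h_def q by (simp add: algebra_simps)
    hence "\<bar>h \<sigma>\<bar> \<le> \<bar>k1 \<sigma> - k1 t\<bar> * \<bar>f1 \<sigma>\<bar> + \<bar>k2 \<sigma> - k2 t\<bar> * \<bar>f2 \<sigma>\<bar>"
      by (simp add: abs_mult[symmetric] abs_triangle_ineq)
    also have "\<dots> \<le> (L1 * \<bar>s - t\<bar>) * R + (L2 * \<bar>s - t\<bar>) * R"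
    proof (intro add_mono mult_mono)
      show "\<bar>k1 \<sigma> - k1 t\<bar> \<le> L1 * \<bar>s - t\<bar>"
        using L1(2)[rule_format, of \<sigma>] that L1(1) by (smt (verit) mult_left_mono)
      show "\<bar>k2 \<sigma> - k2 t\<bar> \<le> L2 * \<bar>s - t\<bar>"
        using L2(2)[rule_format, of \<sigma>] that L2(1) by (smt (verit) mult_left_mono)
    qed (use bnd L1 L2 in auto)
    also have "\<dots> = (L1 + L2) * R * \<bar>s - t\<bar>" by (simp add: algebra_simps)
    finally show ?thesis .
  qed
  have "\<forall>s. \<bar>s - t\<bar> \<le> 1 \<longrightarrow> \<bar>P s - P t - k1 t * (X s - X t) - k2 t * (Y s - Y t)\<bar> \<le> ((L1 + L2) * R) * (s - t)\<^sup>2"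
  proof (intro allI impI)
    fix s assume s: "\<bar>s - t\<bar> \<le> 1"
    have B0: "0 \<le> (L1 + L2) * R * \<bar>s - t\<bar>" using L1 L2 R by simp
    show "\<bar>P s - P t - k1 t * (X s - X t) - k2 t * (Y s - Y t)\<bar> \<le> ((L1 + L2) * R) * (s - t)\<^sup>2"
    proof (cases "t \<le> s")
      case True
      have "\<bar>P s - P t - k1 t * (X s - X t) - k2 t * (Y s - Y t)\<bar> \<le> (L1 + L2) * R * \<bar>s - t\<bar> * (s - t)"
      proof (rule int_bound_real[OF hint[OF True] True _ B0])
        fix \<sigma> assume "\<sigma> \<in> {t..s}"
        hence "\<bar>\<sigma> - t\<bar> \<le> \<bar>s - t\<bar>" by auto
        thus "\<bar>h \<sigma>\<bar> \<le> (L1 + L2) * R * \<bar>s - t\<bar>" by (rule hb[OF _ s])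
      qed
      also have "\<dots> = ((L1 + L2) * R) * (s - t)\<^sup>2" using True by (simp add: power2_eq_square)
      finally show ?thesis .
    next
      case False
      hence F: "s \<le> t" by simp
      have "\<bar>P t - P s - k1 t * (X t - X s) - k2 t * (Y t - Y s)\<bar> \<le> (L1 + L2) * R * \<bar>s - t\<bar> * (t - s)"
      proof (rule int_bound_real[OF hint[OF F] F _ B0])
        fix \<sigma> assume "\<sigma> \<in> {s..t}"
        hence "\<bar>\<sigma> - t\<bar> \<le> \<bar>s - t\<bar>" by auto
        thus "\<bar>h \<sigma>\<bar> \<le> (L1 + L2) * R * \<bar>s - t\<bar>" by (rule hb[OF _ s])
      qed
      also have "\<dots> = ((L1 + L2) * R) * (s - t)\<^sup>2" using F by (simp add: power2_eq_square abs_if algebra_simps)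
      finally show ?thesis by (simp add: abs_minus_commute algebra_simps)
    qed
  qed
  thus ?thesis unfolding linz_def by blast
qed

end

lemma quad_deriv:
  fixes f :: "real \<Rightarrow> real"
  assumes "\<forall>s. \<bar>s - t\<bar> \<le> 1 \<longrightarrow> \<bar>f s - f t - c * (s - t)\<bar> \<le> K * (s - t)\<^sup>2"
  shows "(f has_real_derivative c) (at t)"
proof -
  have "((\<lambda>s. (f s - f t) / (s - t) - c) \<longlongrightarrow> 0) (at t)"
  proof (rule Lim_null_comparison)
    show "eventually (\<lambda>s. norm ((f s - f t) / (s - t) - c) \<le> \<bar>K\<bar> * \<bar>s - t\<bar>) (at t)"
      unfolding eventually_at
    proof (intro exI[of _ 1] conjI ballI impI)
      fix s :: real assume s: "s \<in> UNIV" "s \<noteq> t \<and> dist s t < 1"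
      hence st: "s - t \<noteq> 0" "\<bar>s - t\<bar> \<le> 1" by (auto simp: dist_real_def)
      have "(f s - f t) / (s - t) - c = (f s - f t - c * (s - t)) / (s - t)" using st by (simp add: field_simps)
      hence "norm ((f s - f t) / (s - t) - c) = \<bar>f s - f t - c * (s - t)\<bar> / \<bar>s - t\<bar>" by (simp add: abs_divide)
      also have "\<dots> \<le> (\<bar>K\<bar> * (s - t)\<^sup>2) / \<bar>s - t\<bar>"
      proof (rule divide_right_mono)
        show "\<bar>f s - f t - c * (s - t)\<bar> \<le> \<bar>K\<bar> * (s - t)\<^sup>2"
          using assms[rule_format, OF st(2)] by (smt (verit) abs_ge_self mult_right_mono zero_le_power2)
      qed simp
      also have "\<dots> = \<bar>K\<bar> * \<bar>s - t\<bar>"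
      proof -
        have "(s - t)\<^sup>2 = \<bar>s - t\<bar>\<^sup>2" by (rule power2_abs[symmetric])
        hence "\<bar>K\<bar> * (s - t)\<^sup>2 = (\<bar>K\<bar> * \<bar>s - t\<bar>) * \<bar>s - t\<bar>" by (simp only: power2_eq_square mult.assoc)
        moreover have "\<bar>s - t\<bar> \<noteq> 0" using st by simp
        ultimately show ?thesis by (metis nonzero_mult_div_cancel_right)
      qed
      finally show "norm ((f s - f t) / (s - t) - c) \<le> \<bar>K\<bar> * \<bar>s - t\<bar>" .
    qed simp
    show "((\<lambda>s. \<bar>K\<bar> * \<bar>s - t\<bar>) \<longlongrightarrow> 0) (at t)"
    proof -
      have "((\<lambda>s. \<bar>K\<bar> * \<bar>s - t\<bar>) \<longlongrightarrow> \<bar>K\<bar> * \<bar>t - t\<bar>) (at t)"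
        by (intro tendsto_intros)
      thus ?thesis by simp
    qed
  qed
  hence "((\<lambda>s. (f s - f t) / (s - t)) \<longlongrightarrow> c) (at t)" by (rule LIM_zero_cancel)
  thus ?thesis using has_field_derivative_iff by blast
qed

lemma linz_deriv0:
  assumes "linz X Y f t 0 0"
  shows "(f has_real_derivative 0) (at t)"
proof -
  obtain K where "\<forall>s. \<bar>s - t\<bar> \<le> 1 \<longrightarrow> \<bar>f s - f t - 0 * (X s - X t) - 0 * (Y s - Y t)\<bar> \<le> K * (s - t)\<^sup>2"
    using assms unfolding linz_def by blast
  hence "\<forall>s. \<bar>s - t\<bar> \<le> 1 \<longrightarrow> \<bar>f s - f t - 0 * (s - t)\<bar> \<le> K * (s - t)\<^sup>2" by simp
  thus ?thesis by (rule quad_deriv)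
qed

lemma mult_cont_deriv:
  fixes C G :: "real \<Rightarrow> real"
  assumes C: "(C has_real_derivative c) (at t)" and C0: "C t = 0" and G: "isCont G t"
  shows "((\<lambda>s. C s * G s) has_real_derivative c * G t) (at t)"
proof -
  have "((\<lambda>s. (C s - C t) / (s - t)) \<longlongrightarrow> c) (at t)" using C has_field_derivative_iff by blast
  moreover have "(G \<longlongrightarrow> G t) (at t)" using G by (simp add: isCont_def)
  ultimately have "((\<lambda>s. (C s - C t) / (s - t) * G s) \<longlongrightarrow> c * G t) (at t)" by (rule tendsto_mult)
  moreover have "(\<lambda>s. (C s - C t) / (s - t) * G s) = (\<lambda>s. (C s * G s - C t * G t) / (s - t))"
    using C0 by (intro ext) simp
  ultimately have "((\<lambda>s. (C s * G s - C t * G t) / (s - t)) \<longlongrightarrow> c * G t) (at t)" by simp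
  thus ?thesis using has_field_derivative_iff by blast
qed

locale extl = nrm F for F +
  fixes u :: "real \<Rightarrow> real \<times> real" and x y z v p1 p2 p3 p4 \<theta> :: "real \<Rightarrow> real"
  assumes ext: "normal_extremal F u x y z v p1 p2 p3 p4"
    and ang: "angle_fun F (\<lambda>t. ham1 (p1 t) (p3 t) (p4 t) (x t) (y t) (z t))
                          (\<lambda>t. ham2 (p2 t) (p3 t) (p4 t) (x t)) \<theta>"
begin

definition phi3 where "phi3 = p3 0"
definition phi4 where "phi4 = p4 0"
definition w where "w t = phi3 + phi4 * x t"
definition h1 where "h1 t = ham1 (p1 t) (p3 t) (p4 t) (x t) (y t) (z t)"
definition h2 where "h2 t = ham2 (p2 t) (p3 t) (p4 t) (x t)"

lemma uU: "u t \<in> Uset F" using ext unfolding normal_extremal_def by blast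
lemma ub1: "\<bar>fst (u t)\<bar> \<le> RR" using U_fst(1)[OF uU] .
lemma ub2: "\<bar>snd (u t)\<bar> \<le> RR" using U_fst(2)[OF uU] .

lemma zeros: "x 0 = 0" "y 0 = 0" "z 0 = 0"
  using ext unfolding normal_extremal_def by auto

lemma acs:
  "ac_sol x (\<lambda>t. fst (u t))"
  "ac_sol y (\<lambda>t. snd (u t))"
  "ac_sol z (\<lambda>t. (x t * snd (u t) - y t * fst (u t)) / 2)"
  "ac_sol p1 (\<lambda>t. p4 t * y t * fst (u t) / 12 - (p3 t / 2 + p4 t * x t / 6) * snd (u t))"
  "ac_sol p2 (\<lambda>t. (p3 t / 2 + p4 t * x t / 12) * fst (u t))"
  "ac_sol p3 (\<lambda>t. p4 t * fst (u t) / 2)"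
  "ac_sol p4 (\<lambda>t. 0)"
  using ext unfolding normal_extremal_def by auto

lemma AEcond: "AE t in lborel. h1 t * fst (u t) + h2 t * snd (u t) = 1"
proof -
  have "AE t in lborel.
        ham1 (p1 t) (p3 t) (p4 t) (x t) (y t) (z t) * fst (u t)
          + ham2 (p2 t) (p3 t) (p4 t) (x t) * snd (u t)
        = FU F (ham1 (p1 t) (p3 t) (p4 t) (x t) (y t) (z t), ham2 (p2 t) (p3 t) (p4 t) (x t))
      \<and> FU F (ham1 (p1 t) (p3 t) (p4 t) (x t) (y t) (z t), ham2 (p2 t) (p3 t) (p4 t) (x t)) = 1"
    using ext unfolding normal_extremal_def by blast
  thus ?thesis unfolding h1_def h2_def by (rule AE_mp) (intro AE_I2 impI, simp)
qed

lemma lipx: "\<bar>x s - x t\<bar> \<le> RR * \<bar>s - t\<bar>" by (rule ac_lip[OF acs(1) ub1])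
lemma lipy: "\<bar>y s - y t\<bar> \<le> RR * \<bar>s - t\<bar>" by (rule ac_lip[OF acs(2) ub2])

sublocale L: lipXY x y RR
  by unfold_locales (use RR lipx lipy in auto)

lemma p4c: "p4 t = phi4" unfolding phi4_def by (rule ac_zero[OF acs(7)])

lemma p3e: "p3 t = phi3 + phi4 * x t / 2"
proof -
  have "p3 t - p3 0 = (phi4 / 2) * (x t - x 0)"
    by (rule ac_scale[OF acs(6) acs(1)]) (simp add: p4c)
  thus ?thesis unfolding phi3_def using zeros by simp
qed

lemma lp4: "linz x y p4 t 0 0"
  by (rule linz_cong[OF linz_const[of x y phi4 t]]) (simp add: p4c)

lemma lp3: "linz x y p3 t (phi4 / 2) 0"
proof -
  have "linz x y (\<lambda>s. phi3 + phi4 * x s / 2) t (0 + phi4 * 1 / 2) (0 + phi4 * 0 / 2)"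
    by (intro linz_add linz_div linz_cmult linz_const linz_X)
  thus ?thesis by (rule linz_coef[OF linz_cong]) (auto simp: p3e)
qed

lemma lp2: "linz x y p2 t (p3 t / 2 + p4 t * x t / 12) 0"
proof -
  have k: "linz x y (\<lambda>s. p3 s / 2 + p4 s * x s / 12) t
      (phi4 / 2 / 2 + (p4 t * 1 + x t * 0) / 12) (0 / 2 + (p4 t * 0 + x t * 0) / 12)"
    by (intro linz_add linz_div L.linz_mult lp3 lp4 linz_X)
  show ?thesis
    by (rule L.linz_int[OF acs(5) acs(1) acs(2) _ ub1 ub2 k linz_const[of x y 0 t]]) simp
qed

lemma lp1: "linz x y p1 t (p4 t * y t / 12) (- (p3 t / 2 + p4 t * x t / 6))"
proof -
  have k1: "linz x y (\<lambda>s. p4 s * y s / 12) t ((p4 t * 0 + y t * 0) / 12) ((p4 t * 1 + y t * 0) / 12)"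
    by (intro linz_div L.linz_mult lp4 linz_Y)
  have k2: "linz x y (\<lambda>s. - (p3 s / 2 + p4 s * x s / 6)) t
      (- (phi4 / 2 / 2 + (p4 t * 1 + x t * 0) / 6)) (- (0 / 2 + (p4 t * 0 + x t * 0) / 6))"
    by (intro linz_neg linz_add linz_div L.linz_mult lp3 lp4 linz_X)
  show ?thesis
    by (rule L.linz_int[OF acs(4) acs(1) acs(2) _ ub1 ub2 k1 k2]) (simp add: algebra_simps)
qed

lemma lz: "linz x y z t (- y t / 2) (x t / 2)"
proof -
  have k1: "linz x y (\<lambda>s. - y s / 2) t (- 0 / 2) (- 1 / 2)"
    by (intro linz_div linz_neg linz_Y)
  have k2: "linz x y (\<lambda>s. x s / 2) t (1 / 2) (0 / 2)"
    by (intro linz_div linz_X)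
  show ?thesis
    by (rule L.linz_int[OF acs(3) acs(1) acs(2) _ ub1 ub2 k1 k2]) (simp add: field_simps)
qed

lemma lh2: "linz x y h2 t (w t) 0"
proof -
  have "linz x y (\<lambda>s. p2 s + p3 s * x s / 2 + p4 s * (x s * x s) / 12) t
     ((p3 t / 2 + p4 t * x t / 12) + (p3 t * 1 + x t * (phi4 / 2)) / 2 + (p4 t * (x t * 1 + x t * 1) + (x t * x t) * 0) / 12)
     (0 + (p3 t * 0 + x t * 0) / 2 + (p4 t * (x t * 0 + x t * 0) + (x t * x t) * 0) / 12)"
    by (intro linz_add linz_div L.linz_mult lp2 lp3 lp4 linz_X)
  thus ?thesis
    by (rule linz_coef[OF linz_cong]) (auto simp: h2_def ham2_def power2_eq_square p3e p4c w_def field_simps)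
qed

lemma lh1: "linz x y h1 t 0 (- w t)"
proof -
  have "linz x y (\<lambda>s. p1 s - p3 s * y s / 2 - p4 s * x s * y s / 12 - p4 s * z s / 2) t
     (p4 t * y t / 12 - (p3 t * 0 + y t * (phi4 / 2)) / 2 - ((p4 t * x t) * 0 + y t * (p4 t * 1 + x t * 0)) / 12 - (p4 t * (- y t / 2) + z t * 0) / 2)
     (- (p3 t / 2 + p4 t * x t / 6) - (p3 t * 1 + y t * 0) / 2 - ((p4 t * x t) * 1 + y t * (p4 t * 0 + x t * 0)) / 12 - (p4 t * (x t / 2) + z t * 0) / 2)"
    by (intro linz_diff linz_div L.linz_mult lp1 lp3 lp4 lz linz_X linz_Y)
  thus ?thesis
    by (rule linz_coef[OF linz_cong]) (auto simp: h1_def ham1_def p3e p4c w_def field_simps)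
qed

end

context lipXY begin

lemma linz_int_ae:
  assumes acP: "ac_sol P q" and acX: "ac_sol X f1" and acY: "ac_sol Y f2"
    and negl: "negligible N"
    and q: "\<And>\<sigma>. \<sigma> \<notin> N \<Longrightarrow> q \<sigma> = k1 \<sigma> * f1 \<sigma> + k2 \<sigma> * f2 \<sigma>"
    and bnd: "\<And>\<sigma>. \<bar>f1 \<sigma>\<bar> \<le> R" "\<And>\<sigma>. \<bar>f2 \<sigma>\<bar> \<le> R"
    and l1: "linz X Y k1 t A1 B1" and l2: "linz X Y k2 t A2 B2"
  shows "linz X Y P t (k1 t) (k2 t)"
proof -
  obtain L1 where L1: "L1 \<ge> 0" "\<forall>s. \<bar>s - t\<bar> \<le> 1 \<longrightarrow> \<bar>k1 s - k1 t\<bar> \<le> L1 * \<bar>s - t\<bar>" using linz_lip[OF l1] by blast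
  obtain L2 where L2: "L2 \<ge> 0" "\<forall>s. \<bar>s - t\<bar> \<le> 1 \<longrightarrow> \<bar>k2 s - k2 t\<bar> \<le> L2 * \<bar>s - t\<bar>" using linz_lip[OF l2] by blast
  define h where "h \<sigma> = q \<sigma> - k1 t * f1 \<sigma> - k2 t * f2 \<sigma>" for \<sigma>
  define g where "g \<sigma> = (k1 \<sigma> - k1 t) * f1 \<sigma> + (k2 \<sigma> - k2 t) * f2 \<sigma>" for \<sigma>
  have hint: "(h has_integral (P b - P a - k1 t * (X b - X a) - k2 t * (Y b - Y a))) {a..b}" if "a \<le> b" for a b
    unfolding h_def
    by (intro has_integral_diff has_integral_mult_right ac_int_swap[OF acP that] ac_int_swap[OF acX that] ac_int_swap[OF acY that])
  have gint: "(g has_integral (P b - P a - k1 t * (X b - X a) - k2 t * (Y b - Y a))) {a..b}" if "a \<le> b" for a b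
  proof (rule has_integral_spike[OF negl _ hint[OF that]])
    fix \<sigma> assume "\<sigma> \<in> {a..b} - N"
    thus "g \<sigma> = h \<sigma>" unfolding g_def h_def using q[of \<sigma>] by (simp add: algebra_simps)
  qed
  have hb: "\<bar>g \<sigma>\<bar> \<le> (L1 + L2) * R * \<bar>s - t\<bar>" if "\<bar>\<sigma> - t\<bar> \<le> \<bar>s - t\<bar>" "\<bar>s - t\<bar> \<le> 1" for \<sigma> s
  proof -
    have "\<bar>g \<sigma>\<bar> \<le> \<bar>k1 \<sigma> - k1 t\<bar> * \<bar>f1 \<sigma>\<bar> + \<bar>k2 \<sigma> - k2 t\<bar> * \<bar>f2 \<sigma>\<bar>"
      unfolding g_def by (simp add: abs_mult[symmetric] abs_triangle_ineq)
    also have "\<dots> \<le> (L1 * \<bar>s - t\<bar>) * R + (L2 * \<bar>s - t\<bar>) * R"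
    proof (intro add_mono mult_mono)
      show "\<bar>k1 \<sigma> - k1 t\<bar> \<le> L1 * \<bar>s - t\<bar>"
        using L1(2)[rule_format, of \<sigma>] that L1(1) by (smt (verit) mult_left_mono)
      show "\<bar>k2 \<sigma> - k2 t\<bar> \<le> L2 * \<bar>s - t\<bar>"
        using L2(2)[rule_format, of \<sigma>] that L2(1) by (smt (verit) mult_left_mono)
    qed (use bnd L1 L2 in auto)
    also have "\<dots> = (L1 + L2) * R * \<bar>s - t\<bar>" by (simp add: algebra_simps)
    finally show ?thesis .
  qed
  have "\<forall>s. \<bar>s - t\<bar> \<le> 1 \<longrightarrow> \<bar>P s - P t - k1 t * (X s - X t) - k2 t * (Y s - Y t)\<bar> \<le> ((L1 + L2) * R) * (s - t)\<^sup>2"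
  proof (intro allI impI)
    fix s assume s: "\<bar>s - t\<bar> \<le> 1"
    have B0: "0 \<le> (L1 + L2) * R * \<bar>s - t\<bar>" using L1 L2 R by simp
    show "\<bar>P s - P t - k1 t * (X s - X t) - k2 t * (Y s - Y t)\<bar> \<le> ((L1 + L2) * R) * (s - t)\<^sup>2"
    proof (cases "t \<le> s")
      case True
      have "\<bar>P s - P t - k1 t * (X s - X t) - k2 t * (Y s - Y t)\<bar> \<le> (L1 + L2) * R * \<bar>s - t\<bar> * (s - t)"
      proof (rule int_bound_real[OF gint[OF True] True _ B0])
        fix \<sigma> assume "\<sigma> \<in> {t..s}"
        hence "\<bar>\<sigma> - t\<bar> \<le> \<bar>s - t\<bar>" by auto
        thus "\<bar>g \<sigma>\<bar> \<le> (L1 + L2) * R * \<bar>s - t\<bar>" by (rule hb[OF _ s])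
      qed
      also have "\<dots> = ((L1 + L2) * R) * (s - t)\<^sup>2" using True by (simp add: power2_eq_square)
      finally show ?thesis .
    next
      case False
      hence F: "s \<le> t" by simp
      have "\<bar>P t - P s - k1 t * (X t - X s) - k2 t * (Y t - Y s)\<bar> \<le> (L1 + L2) * R * \<bar>s - t\<bar> * (t - s)"
      proof (rule int_bound_real[OF gint[OF F] F _ B0])
        fix \<sigma> assume "\<sigma> \<in> {s..t}"
        hence "\<bar>\<sigma> - t\<bar> \<le> \<bar>s - t\<bar>" by auto
        thus "\<bar>g \<sigma>\<bar> \<le> (L1 + L2) * R * \<bar>s - t\<bar>" by (rule hb[OF _ s])
      qed
      also have "\<dots> = ((L1 + L2) * R) * (s - t)\<^sup>2" using F by (simp add: power2_eq_square abs_if algebra_simps)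
      finally show ?thesis by (simp add: abs_minus_commute algebra_simps)
    qed
  qed
  thus ?thesis unfolding linz_def by blast
qed

end

context extl begin

lemma lw: "linz x y w t phi4 0"
proof -
  have "linz x y (\<lambda>s. phi3 + phi4 * x s) t (0 + phi4 * 1) (0 + phi4 * 0)"
    by (intro linz_add linz_cmult linz_const linz_X)
  thus ?thesis by (rule linz_coef[OF linz_cong]) (auto simp: w_def)
qed

lemma firstint: "(w s)\<^sup>2 = phi3\<^sup>2 + 2 * phi4 * (h2 s - p2 0)"
proof -
  define D where "D \<sigma> = w \<sigma> * w \<sigma> - 2 * phi4 * h2 \<sigma>" for \<sigma>
  have "linz x y D t 0 0" for t
  proof -
    have "linz x y (\<lambda>\<sigma>. w \<sigma> * w \<sigma> - (2 * phi4) * h2 \<sigma>) t (w t * phi4 + w t * phi4 - (2 * phi4) * w t) (w t * 0 + w t * 0 - (2 * phi4) * 0)"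
      by (intro linz_diff linz_cmult L.linz_mult lw lh2)
    thus ?thesis by (rule linz_coef[OF linz_cong]) (auto simp: D_def)
  qed
  hence "\<forall>t. (D has_real_derivative 0) (at t)" using linz_deriv0 by blast
  hence "D s = D 0" by (rule DERIV_isconst_all)
  moreover have "w 0 = phi3" "h2 0 = p2 0" unfolding w_def h2_def ham2_def using zeros by auto
  ultimately show ?thesis unfolding D_def by (simp add: power2_eq_square algebra_simps)
qed

lemma negN: "\<exists>N. negligible N \<and> (\<forall>t. t \<notin> N \<longrightarrow> h1 t * fst (u t) + h2 t * snd (u t) = 1)"
proof -
  from AEcond obtain N where N: "{t \<in> space lborel. \<not> (h1 t * fst (u t) + h2 t * snd (u t) = 1)} \<subseteq> N"
    "emeasure lborel N = 0" "N \<in> sets lborel" by (rule AE_E)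
  have "N \<in> null_sets lborel" using N by (simp add: null_sets_def)
  hence "N \<in> null_sets lebesgue" by (rule null_sets_completionI)
  hence "negligible N" by (simp add: negligible_iff_null_sets)
  moreover have "\<forall>t. t \<notin> N \<longrightarrow> h1 t * fst (u t) + h2 t * snd (u t) = 1" using N(1) by auto
  ultimately show ?thesis by blast
qed

lemma lid: "linz x y (\<lambda>\<sigma>. \<sigma>) t (h1 t) (h2 t)"
proof -
  obtain N where N: "negligible N" "\<forall>t. t \<notin> N \<longrightarrow> h1 t * fst (u t) + h2 t * snd (u t) = 1"
    using negN by blast
  have ac1: "ac_sol (\<lambda>\<sigma>. \<sigma>) (\<lambda>\<sigma>. 1)"
    unfolding ac_sol_def
  proof (intro allI impI)
    fix a b :: real assume ab: "a \<le> b"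
    show "((\<lambda>\<sigma>. 1::real) has_integral (b - a)) {a..b}"
      using has_integral_const_real[of "1::real" a b] ab by (simp add: content_real)
  qed
  show ?thesis
    by (rule L.linz_int_ae[OF ac1 acs(1) acs(2) N(1) _ ub1 ub2 lh1 lh2]) (use N(2) in auto)
qed

lemma Cder: "((\<lambda>s. h1 t * h2 s - h2 t * h1 s) has_real_derivative w t) (at t)"
proof -
  have lC: "linz x y (\<lambda>s. h1 t * h2 s - h2 t * h1 s) t (h1 t * w t - h2 t * 0) (h1 t * 0 - h2 t * (- w t))"
    by (intro linz_diff linz_cmult lh1 lh2)
  obtain K1 where K1: "\<forall>s. \<bar>s - t\<bar> \<le> 1 \<longrightarrow> \<bar>(h1 t * h2 s - h2 t * h1 s) - (h1 t * h2 t - h2 t * h1 t)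
      - (h1 t * w t - h2 t * 0) * (x s - x t) - (h1 t * 0 - h2 t * (- w t)) * (y s - y t)\<bar> \<le> K1 * (s - t)\<^sup>2"
    using lC unfolding linz_def by blast
  obtain K2 where K2: "\<forall>s. \<bar>s - t\<bar> \<le> 1 \<longrightarrow> \<bar>s - t - h1 t * (x s - x t) - h2 t * (y s - y t)\<bar> \<le> K2 * (s - t)\<^sup>2"
    using lid unfolding linz_def by blast
  have "\<forall>s. \<bar>s - t\<bar> \<le> 1 \<longrightarrow> \<bar>(h1 t * h2 s - h2 t * h1 s) - (h1 t * h2 t - h2 t * h1 t) - w t * (s - t)\<bar> \<le> (K1 + \<bar>w t\<bar> * K2) * (s - t)\<^sup>2"
  proof (intro allI impI)
    fix s assume s: "\<bar>s - t\<bar> \<le> 1"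
    define E1 where "E1 = (h1 t * h2 s - h2 t * h1 s) - (h1 t * h2 t - h2 t * h1 t)
      - (h1 t * w t - h2 t * 0) * (x s - x t) - (h1 t * 0 - h2 t * (- w t)) * (y s - y t)"
    define E2 where "E2 = s - t - h1 t * (x s - x t) - h2 t * (y s - y t)"
    have eq: "(h1 t * h2 s - h2 t * h1 s) - (h1 t * h2 t - h2 t * h1 t) - w t * (s - t) = E1 - w t * E2"
      unfolding E1_def E2_def by (simp add: algebra_simps)
    have "\<bar>E1 - w t * E2\<bar> \<le> \<bar>E1\<bar> + \<bar>w t\<bar> * \<bar>E2\<bar>" by (simp add: abs_mult[symmetric] abs_triangle_ineq4)
    also have "\<dots> \<le> K1 * (s - t)\<^sup>2 + \<bar>w t\<bar> * (K2 * (s - t)\<^sup>2)"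
      using K1[rule_format, OF s] K2[rule_format, OF s] unfolding E1_def[symmetric] E2_def[symmetric]
      by (intro add_mono mult_left_mono) auto
    finally show "\<bar>(h1 t * h2 s - h2 t * h1 s) - (h1 t * h2 t - h2 t * h1 t) - w t * (s - t)\<bar> \<le> (K1 + \<bar>w t\<bar> * K2) * (s - t)\<^sup>2"
      unfolding eq by (simp add: algebra_simps)
  qed
  thus ?thesis by (rule quad_deriv)
qed

end

lemma lip_isCont:
  fixes f :: "real \<Rightarrow> real"
  assumes "\<And>s. \<bar>f s - f t\<bar> \<le> L * \<bar>s - t\<bar>"
  shows "isCont f t"
proof -
  have "((\<lambda>s. f s - f t) \<longlongrightarrow> 0) (at t)"
  proof (rule Lim_null_comparison)
    show "eventually (\<lambda>s. norm (f s - f t) \<le> L * \<bar>s - t\<bar>) (at t)"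
      using assms by simp
    have "((\<lambda>s. L * \<bar>s - t\<bar>) \<longlongrightarrow> L * \<bar>t - t\<bar>) (at t)" by (intro tendsto_intros)
    thus "((\<lambda>s. L * \<bar>s - t\<bar>) \<longlongrightarrow> 0) (at t)" by simp
  qed
  hence "(f \<longlongrightarrow> f t) (at t)" by (rule LIM_zero_cancel)
  thus ?thesis by (simp add: isCont_def)
qed

lemma sign_const:
  fixes D :: "real \<Rightarrow> real"
  assumes contD: "\<And>t. isCont D t" and nz: "\<And>t. a < t \<Longrightarrow> t < b \<Longrightarrow> D t \<noteq> 0"
    and \<xi>: "a < \<xi>" "\<xi> < b" "D \<xi> > 0"
  shows "\<forall>t. a < t \<and> t < b \<longrightarrow> D t > 0"
proof (intro allI impI, rule ccontr)
  fix t assume t: "a < t \<and> t < b" and "\<not> D t > 0"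
  hence Dt: "D t \<le> 0" by simp
  have co: "continuous_on S D" for S using contD by (simp add: continuous_at_imp_continuous_on)
  show False
  proof (cases "t \<le> \<xi>")
    case True
    obtain c where "t \<le> c" "c \<le> \<xi>" "D c = 0" using IVT'[of D t 0 \<xi>, OF Dt _ True co] \<xi> by auto
    thus False using nz[of c] t \<xi> by auto
  next
    case False
    obtain c where "\<xi> \<le> c" "c \<le> t" "D c = 0" using IVT2'[of D t 0 \<xi>, OF Dt _ _ co] \<xi> False by auto
    thus False using nz[of c] t \<xi> by auto
  qed
qed

lemma sgn_mvt_pos:
  fixes \<theta> D :: "real \<Rightarrow> real"
  assumes der: "\<And>t. (\<theta> has_real_derivative D t) (at t)" and contD: "\<And>t. isCont D t"
    and ab: "a < b" and nz: "\<And>t. a < t \<Longrightarrow> t < b \<Longrightarrow> D t \<noteq> 0" and inc: "\<theta> b > \<theta> a"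
  shows "\<forall>t. a < t \<and> t < b \<longrightarrow> D t > 0"
proof -
  obtain \<xi> where \<xi>: "a < \<xi>" "\<xi> < b" "\<theta> b - \<theta> a = (b - a) * D \<xi>" using MVT2[OF ab der] by blast
  have "(b - a) * D \<xi> > 0" using \<xi>(3) inc by simp
  hence "D \<xi> > 0" using ab by (simp add: zero_less_mult_iff)
  thus ?thesis using sign_const[OF contD nz \<xi>(1,2)] by blast
qed

lemma sgn_mvt_neg:
  fixes \<theta> D :: "real \<Rightarrow> real"
  assumes der: "\<And>t. (\<theta> has_real_derivative D t) (at t)" and contD: "\<And>t. isCont D t"
    and ab: "a < b" and nz: "\<And>t. a < t \<Longrightarrow> t < b \<Longrightarrow> D t \<noteq> 0" and dec: "\<theta> b < \<theta> a"
  shows "\<forall>t. a < t \<and> t < b \<longrightarrow> D t < 0"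
proof -
  have "\<forall>t. a < t \<and> t < b \<longrightarrow> - D t > 0"
  proof (rule sgn_mvt_pos[of "\<lambda>t. - \<theta> t"])
    show "((\<lambda>t. - \<theta> t) has_real_derivative - D t) (at t)" for t using der[of t] by (rule DERIV_minus)
    show "isCont (\<lambda>t. - D t) t" for t using contD[of t] by (rule continuous_intros)
  qed (use ab nz dec in auto)
  thus ?thesis by auto
qed

context extl begin

lemma angf: "continuous_on UNIV \<theta>" "h1 t = rr F (\<theta> t) * cos (\<theta> t)" "h2 t = rr F (\<theta> t) * sin (\<theta> t)"
  using ang unfolding angle_fun_def h1_def h2_def by auto

lemma th_isCont: "isCont \<theta> t"
  using angf(1) continuous_on_eq_continuous_at by blast

lemma thder: "(\<theta> has_real_derivative (w t / (rr F (\<theta> t))\<^sup>2)) (at t)"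
proof -
  define r where "r \<sigma> = rr F (\<theta> \<sigma>)" for \<sigma>
  have rpos: "r \<sigma> > 0" for \<sigma> unfolding r_def by (rule rr_pos)
  have rc: "isCont r t" unfolding r_def by (rule isCont_o2[OF th_isCont rr_isCont])
  define G where "G \<sigma> = 1 / (r t * r \<sigma>)" for \<sigma>
  have Gc: "isCont G t" unfolding G_def using rc rpos[of t]
    by (intro continuous_intros) auto
  define C where "C \<sigma> = h1 t * h2 \<sigma> - h2 t * h1 \<sigma>" for \<sigma>
  have Cd: "(C has_real_derivative w t) (at t)" unfolding C_def by (rule Cder)
  have C0: "C t = 0" unfolding C_def by simp
  define Q where "Q \<sigma> = C \<sigma> * G \<sigma>" for \<sigma>
  have Qd: "(Q has_real_derivative w t * G t) (at t)" unfolding Q_def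
    by (rule mult_cont_deriv[OF Cd C0 Gc])
  have Qeq: "Q \<sigma> = sin (\<theta> \<sigma> - \<theta> t)" for \<sigma>
  proof -
    have "C \<sigma> = r t * r \<sigma> * sin (\<theta> \<sigma> - \<theta> t)" unfolding C_def r_def angf(2,3)
      by (simp add: sin_diff algebra_simps)
    thus ?thesis unfolding Q_def G_def using rpos[of t] rpos[of \<sigma>] by simp
  qed
  have "pi / 2 > 0" by simp
  from cont_near[OF th_isCont this] obtain \<delta> where \<delta>: "\<delta> > 0" "\<forall>y. \<bar>y - t\<bar> < \<delta> \<longrightarrow> \<bar>\<theta> y - \<theta> t\<bar> < pi / 2"
    by blast
  have a0: "DERIV arcsin (Q t) :> 1"
    using DERIV_arcsin[of 0] Qeq[of t] by simp
  have "((\<lambda>\<sigma>. \<theta> t + arcsin (Q \<sigma>)) has_real_derivative 0 + 1 * (w t * G t)) (at t)"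
    by (rule DERIV_add[OF DERIV_const DERIV_chain2[OF a0 Qd]])
  hence d1: "((\<lambda>\<sigma>. \<theta> t + arcsin (Q \<sigma>)) has_real_derivative w t * G t) (at t)" by simp
  have "(\<theta> has_real_derivative w t * G t) (at t)"
  proof (rule has_field_derivative_transform_within_open[OF d1 open_ball])
    show "t \<in> ball t \<delta>" using \<delta> by simp
    fix \<sigma> assume "\<sigma> \<in> ball t \<delta>"
    hence "\<bar>\<sigma> - t\<bar> < \<delta>" by (simp add: dist_real_def abs_minus_commute)
    hence "\<bar>\<theta> \<sigma> - \<theta> t\<bar> < pi / 2" using \<delta> by blast
    hence B: "\<theta> \<sigma> - \<theta> t < pi / 2 \<and> - (\<theta> \<sigma> - \<theta> t) < pi / 2" by (simp only: abs_less_iff)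
    have B1: "- (pi / 2) \<le> \<theta> \<sigma> - \<theta> t" using B by (elim conjE) linarith
    have B2: "\<theta> \<sigma> - \<theta> t \<le> pi / 2" using B by (elim conjE) linarith
    have "arcsin (sin (\<theta> \<sigma> - \<theta> t)) = \<theta> \<sigma> - \<theta> t" by (rule arcsin_sin[OF B1 B2])
    thus "\<theta> t + arcsin (Q \<sigma>) = \<theta> \<sigma>" unfolding Qeq by simp
  qed
  moreover have "w t * G t = w t / (rr F (\<theta> t))\<^sup>2" unfolding G_def r_def by (simp add: power2_eq_square)
  ultimately show ?thesis by simp
qed

lemma thsq: "(w t / (rr F (\<theta> t))\<^sup>2)\<^sup>2 = Phi F (p2 0) (p3 0) (p4 0) (\<theta> t)"
proof -
  have "(w t)\<^sup>2 = (p3 0)\<^sup>2 + 2 * p4 0 * (rr F (\<theta> t) * sin (\<theta> t) - p2 0)"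
    using firstint[of t] angf(3)[of t] unfolding phi3_def phi4_def by simp
  moreover have "((rr F (\<theta> t))\<^sup>2)\<^sup>2 = (rr F (\<theta> t)) ^ 4" by (simp flip: power_mult)
  ultimately show ?thesis unfolding Phi_def by (simp add: power_divide)
qed

lemma w_isCont: "isCont w t"
proof -
  have "isCont x t" by (rule lip_isCont[OF lipx])
  thus ?thesis unfolding w_def[abs_def] by (intro continuous_intros)
qed

lemma D_isCont: "isCont (\<lambda>t. w t / (rr F (\<theta> t))\<^sup>2) t"
proof -
  have "isCont (\<lambda>t. rr F (\<theta> t)) t" by (rule isCont_o2[OF th_isCont rr_isCont])
  moreover have "(rr F (\<theta> t))\<^sup>2 \<noteq> 0" using rr_pos[of "\<theta> t"] by simp
  ultimately show ?thesis using w_isCont by (intro continuous_intros) auto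
qed

end

lemma part3:
  fixes \<theta> D :: "real \<Rightarrow> real"
  assumes der: "\<And>t. (\<theta> has_real_derivative D t) (at t)" and contD: "\<And>t. isCont D t"
    and contT: "\<And>t. isCont \<theta> t"
    and nz: "\<And>t. \<Theta>1 < \<theta> t \<Longrightarrow> \<theta> t < \<Theta>2 \<Longrightarrow> D t \<noteq> 0"
    and range: "\<forall>t. \<Theta>1 \<le> \<theta> t \<and> \<theta> t \<le> \<Theta>2" and lt: "\<Theta>1 < \<Theta>2"
  shows
   "(\<forall>t0. \<theta> t0 = \<Theta>1 \<longrightarrow>
        ((\<exists>\<delta>>0. \<forall>t. t0 < t \<and> t < t0 + \<delta> \<longrightarrow> \<theta> t \<noteq> \<Theta>1) \<longrightarrow>
           (\<exists>\<delta>>0. \<forall>t. t0 < t \<and> t < t0 + \<delta> \<longrightarrow>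
               \<theta> differentiable (at t) \<and> deriv \<theta> t * (t - t0) > 0))
      \<and> ((\<exists>\<delta>>0. \<forall>t. t0 - \<delta> < t \<and> t < t0 \<longrightarrow> \<theta> t \<noteq> \<Theta>1) \<longrightarrow>
           (\<exists>\<delta>>0. \<forall>t. t0 - \<delta> < t \<and> t < t0 \<longrightarrow>
               \<theta> differentiable (at t) \<and> deriv \<theta> t * (t - t0) > 0)))
  \<and> (\<forall>t0. \<theta> t0 = \<Theta>2 \<longrightarrow>
        ((\<exists>\<delta>>0. \<forall>t. t0 < t \<and> t < t0 + \<delta> \<longrightarrow> \<theta> t \<noteq> \<Theta>2) \<longrightarrow>
           (\<exists>\<delta>>0. \<forall>t. t0 < t \<and> t < t0 + \<delta> \<longrightarrow>
               \<theta> differentiable (at t) \<and> deriv \<theta> t * (t - t0) < 0))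
      \<and> ((\<exists>\<delta>>0. \<forall>t. t0 - \<delta> < t \<and> t < t0 \<longrightarrow> \<theta> t \<noteq> \<Theta>2) \<longrightarrow>
           (\<exists>\<delta>>0. \<forall>t. t0 - \<delta> < t \<and> t < t0 \<longrightarrow>
               \<theta> differentiable (at t) \<and> deriv \<theta> t * (t - t0) < 0)))"
proof -
  have dif: "\<theta> differentiable (at t)" for t using der[of t] real_differentiable_def by blast
  have dv: "deriv \<theta> t = D t" for t using der[of t] by (rule DERIV_imp_deriv)
  have near: "\<exists>\<delta>>0. \<forall>t. \<bar>t - t0\<bar> < \<delta> \<longrightarrow> \<bar>\<theta> t - \<theta> t0\<bar> < \<Theta>2 - \<Theta>1" for t0
    using cont_near[OF contT, of "\<Theta>2 - \<Theta>1" t0] lt by simp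
  have A: "\<exists>\<delta>>0. \<forall>t. t0 < t \<and> t < t0 + \<delta> \<longrightarrow> \<theta> differentiable (at t) \<and> deriv \<theta> t * (t - t0) > 0"
    if t0: "\<theta> t0 = \<Theta>1" and d1: "\<delta>1 > 0" "\<forall>t. t0 < t \<and> t < t0 + \<delta>1 \<longrightarrow> \<theta> t \<noteq> \<Theta>1" for t0 \<delta>1
  proof -
    obtain \<delta>2 where d2: "\<delta>2 > 0" "\<forall>t. \<bar>t - t0\<bar> < \<delta>2 \<longrightarrow> \<bar>\<theta> t - \<theta> t0\<bar> < \<Theta>2 - \<Theta>1" using near by blast
    define \<delta> where "\<delta> = min \<delta>1 \<delta>2 / 2"
    have \<delta>: "\<delta> > 0" "\<delta> < \<delta>1" "\<delta> < \<delta>2" unfolding \<delta>_def using d1 d2 by auto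
    have inside: "\<Theta>1 < \<theta> t \<and> \<theta> t < \<Theta>2" if "t0 < t" "t \<le> t0 + \<delta>" for t
    proof -
      have "\<theta> t \<noteq> \<Theta>1" using d1(2) that \<delta> by auto
      moreover have "\<bar>\<theta> t - \<theta> t0\<bar> < \<Theta>2 - \<Theta>1" using d2(2) that \<delta> by auto
      ultimately show ?thesis using range t0 by (auto simp: abs_less_iff) (metis order_le_less)
    qed
    have "\<forall>t. t0 < t \<and> t < t0 + \<delta> \<longrightarrow> D t > 0"
    proof (rule sgn_mvt_pos[OF der contD])
      show "t0 < t0 + \<delta>" using \<delta> by simp
      show "D t \<noteq> 0" if "t0 < t" "t < t0 + \<delta>" for t using inside[of t] that nz by auto
      show "\<theta> (t0 + \<delta>) > \<theta> t0" using inside[of "t0 + \<delta>"] \<delta> t0 by auto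
    qed
    thus ?thesis using \<delta> dif dv by (intro exI[of _ \<delta>]) auto
  qed
  have B: "\<exists>\<delta>>0. \<forall>t. t0 - \<delta> < t \<and> t < t0 \<longrightarrow> \<theta> differentiable (at t) \<and> deriv \<theta> t * (t - t0) > 0"
    if t0: "\<theta> t0 = \<Theta>1" and d1: "\<delta>1 > 0" "\<forall>t. t0 - \<delta>1 < t \<and> t < t0 \<longrightarrow> \<theta> t \<noteq> \<Theta>1" for t0 \<delta>1
  proof -
    obtain \<delta>2 where d2: "\<delta>2 > 0" "\<forall>t. \<bar>t - t0\<bar> < \<delta>2 \<longrightarrow> \<bar>\<theta> t - \<theta> t0\<bar> < \<Theta>2 - \<Theta>1" using near by blast
    define \<delta> where "\<delta> = min \<delta>1 \<delta>2 / 2"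
    have \<delta>: "\<delta> > 0" "\<delta> < \<delta>1" "\<delta> < \<delta>2" unfolding \<delta>_def using d1 d2 by auto
    have inside: "\<Theta>1 < \<theta> t \<and> \<theta> t < \<Theta>2" if "t0 - \<delta> \<le> t" "t < t0" for t
    proof -
      have "\<theta> t \<noteq> \<Theta>1" using d1(2) that \<delta> by auto
      moreover have "\<bar>\<theta> t - \<theta> t0\<bar> < \<Theta>2 - \<Theta>1" using d2(2) that \<delta> by auto
      ultimately show ?thesis using range t0 by (auto simp: abs_less_iff) (metis order_le_less)
    qed
    have "\<forall>t. t0 - \<delta> < t \<and> t < t0 \<longrightarrow> D t < 0"
    proof (rule sgn_mvt_neg[OF der contD])
      show "t0 - \<delta> < t0" using \<delta> by simp
      show "D t \<noteq> 0" if "t0 - \<delta> < t" "t < t0" for t using inside[of t] that nz by auto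
      show "\<theta> t0 < \<theta> (t0 - \<delta>)" using inside[of "t0 - \<delta>"] \<delta> t0 by auto
    qed
    thus ?thesis using \<delta> dif dv by (intro exI[of _ \<delta>]) (auto simp: mult_neg_neg)
  qed
  have C: "\<exists>\<delta>>0. \<forall>t. t0 < t \<and> t < t0 + \<delta> \<longrightarrow> \<theta> differentiable (at t) \<and> deriv \<theta> t * (t - t0) < 0"
    if t0: "\<theta> t0 = \<Theta>2" and d1: "\<delta>1 > 0" "\<forall>t. t0 < t \<and> t < t0 + \<delta>1 \<longrightarrow> \<theta> t \<noteq> \<Theta>2" for t0 \<delta>1
  proof -
    obtain \<delta>2 where d2: "\<delta>2 > 0" "\<forall>t. \<bar>t - t0\<bar> < \<delta>2 \<longrightarrow> \<bar>\<theta> t - \<theta> t0\<bar> < \<Theta>2 - \<Theta>1" using near by blast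
    define \<delta> where "\<delta> = min \<delta>1 \<delta>2 / 2"
    have \<delta>: "\<delta> > 0" "\<delta> < \<delta>1" "\<delta> < \<delta>2" unfolding \<delta>_def using d1 d2 by auto
    have inside: "\<Theta>1 < \<theta> t \<and> \<theta> t < \<Theta>2" if "t0 < t" "t \<le> t0 + \<delta>" for t
    proof -
      have "\<theta> t \<noteq> \<Theta>2" using d1(2) that \<delta> by auto
      moreover have "\<bar>\<theta> t - \<theta> t0\<bar> < \<Theta>2 - \<Theta>1" using d2(2) that \<delta> by auto
      ultimately show ?thesis using range t0 by (auto simp: abs_less_iff) (metis order_le_less)
    qed
    have "\<forall>t. t0 < t \<and> t < t0 + \<delta> \<longrightarrow> D t < 0"
    proof (rule sgn_mvt_neg[OF der contD])
      show "t0 < t0 + \<delta>" using \<delta> by simp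
      show "D t \<noteq> 0" if "t0 < t" "t < t0 + \<delta>" for t using inside[of t] that nz by auto
      show "\<theta> (t0 + \<delta>) < \<theta> t0" using inside[of "t0 + \<delta>"] \<delta> t0 by auto
    qed
    thus ?thesis using \<delta> dif dv by (intro exI[of _ \<delta>]) (auto simp: mult_neg_pos)
  qed
  have D: "\<exists>\<delta>>0. \<forall>t. t0 - \<delta> < t \<and> t < t0 \<longrightarrow> \<theta> differentiable (at t) \<and> deriv \<theta> t * (t - t0) < 0"
    if t0: "\<theta> t0 = \<Theta>2" and d1: "\<delta>1 > 0" "\<forall>t. t0 - \<delta>1 < t \<and> t < t0 \<longrightarrow> \<theta> t \<noteq> \<Theta>2" for t0 \<delta>1
  proof -
    obtain \<delta>2 where d2: "\<delta>2 > 0" "\<forall>t. \<bar>t - t0\<bar> < \<delta>2 \<longrightarrow> \<bar>\<theta> t - \<theta> t0\<bar> < \<Theta>2 - \<Theta>1" using near by blast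
    define \<delta> where "\<delta> = min \<delta>1 \<delta>2 / 2"
    have \<delta>: "\<delta> > 0" "\<delta> < \<delta>1" "\<delta> < \<delta>2" unfolding \<delta>_def using d1 d2 by auto
    have inside: "\<Theta>1 < \<theta> t \<and> \<theta> t < \<Theta>2" if "t0 - \<delta> \<le> t" "t < t0" for t
    proof -
      have "\<theta> t \<noteq> \<Theta>2" using d1(2) that \<delta> by auto
      moreover have "\<bar>\<theta> t - \<theta> t0\<bar> < \<Theta>2 - \<Theta>1" using d2(2) that \<delta> by auto
      ultimately show ?thesis using range t0 by (auto simp: abs_less_iff) (metis order_le_less)
    qed
    have "\<forall>t. t0 - \<delta> < t \<and> t < t0 \<longrightarrow> D t > 0"
    proof (rule sgn_mvt_pos[OF der contD])
      show "t0 - \<delta> < t0" using \<delta> by simp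
      show "D t \<noteq> 0" if "t0 - \<delta> < t" "t < t0" for t using inside[of t] that nz by auto
      show "\<theta> t0 > \<theta> (t0 - \<delta>)" using inside[of "t0 - \<delta>"] \<delta> t0 by auto
    qed
    thus ?thesis using \<delta> dif dv by (intro exI[of _ \<delta>]) (auto simp: mult_pos_neg)
  qed
  show ?thesis using A B C D by blast
qed

lemma Phi_sign:
  assumes "is_norm2 F"
  shows "Phi F a b c s > 0 \<longleftrightarrow> b\<^sup>2 + 2 * c * (rr F s * sin s - a) > 0"
    and "Phi F a b c s = 0 \<longleftrightarrow> b\<^sup>2 + 2 * c * (rr F s * sin s - a) = 0"
proof -
  interpret nrm F by unfold_locales (rule assms)
  have "(rr F s) ^ 4 > 0" using rr_pos[of s] by simp
  thus "Phi F a b c s > 0 \<longleftrightarrow> b\<^sup>2 + 2 * c * (rr F s * sin s - a) > 0"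
    "Phi F a b c s = 0 \<longleftrightarrow> b\<^sup>2 + 2 * c * (rr F s * sin s - a) = 0"
    unfolding Phi_def by (simp_all add: zero_less_divide_iff)
qed

theorem lemma2:
  fixes F :: "real \<times> real \<Rightarrow> real" and u :: "real \<Rightarrow> real \<times> real"
    and x y z v p1 p2 p3 p4 \<theta> :: "real \<Rightarrow> real" and \<Theta>1 \<Theta>2 :: real
  assumes norm: "is_norm2 F"
    and ext: "normal_extremal F u x y z v p1 p2 p3 p4"
    and ang: "angle_fun F (\<lambda>t. ham1 (p1 t) (p3 t) (p4 t) (x t) (y t) (z t))
                          (\<lambda>t. ham2 (p2 t) (p3 t) (p4 t) (x t)) \<theta>"
    and phi4: "p4 0 \<noteq> 0"
    and lt: "\<Theta>1 < \<Theta>2"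
    and pos: "\<forall>s. \<Theta>1 < s \<and> s < \<Theta>2 \<longrightarrow> Phi F (p2 0) (p3 0) (p4 0) s > 0"
    and z1: "Phi F (p2 0) (p3 0) (p4 0) \<Theta>1 = 0"
    and z2: "Phi F (p2 0) (p3 0) (p4 0) \<Theta>2 = 0"
    and range: "\<forall>t. \<Theta>1 \<le> \<theta> t \<and> \<theta> t \<le> \<Theta>2"
  shows
   "(\<exists>\<epsilon>>0. \<forall>s d. \<Theta>1 < s \<and> s < \<Theta>2 \<and> s < \<Theta>1 + \<epsilon> \<and> is_rprime F s d
        \<longrightarrow> p4 0 * u1fun F s d > 0)
  \<and> (\<exists>\<epsilon>>0. \<forall>s d. \<Theta>1 < s \<and> s < \<Theta>2 \<and> \<Theta>2 - \<epsilon> < s \<and> is_rprime F s d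
        \<longrightarrow> p4 0 * u1fun F s d < 0)
  \<and> (\<forall>t0. \<theta> t0 = \<Theta>1 \<longrightarrow>
        ((\<exists>\<delta>>0. \<forall>t. t0 < t \<and> t < t0 + \<delta> \<longrightarrow> \<theta> t \<noteq> \<Theta>1) \<longrightarrow>
           (\<exists>\<delta>>0. \<forall>t. t0 < t \<and> t < t0 + \<delta> \<longrightarrow>
               \<theta> differentiable (at t) \<and> deriv \<theta> t * (t - t0) > 0))
      \<and> ((\<exists>\<delta>>0. \<forall>t. t0 - \<delta> < t \<and> t < t0 \<longrightarrow> \<theta> t \<noteq> \<Theta>1) \<longrightarrow>
           (\<exists>\<delta>>0. \<forall>t. t0 - \<delta> < t \<and> t < t0 \<longrightarrow>
               \<theta> differentiable (at t) \<and> deriv \<theta> t * (t - t0) > 0)))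
  \<and> (\<forall>t0. \<theta> t0 = \<Theta>2 \<longrightarrow>
        ((\<exists>\<delta>>0. \<forall>t. t0 < t \<and> t < t0 + \<delta> \<longrightarrow> \<theta> t \<noteq> \<Theta>2) \<longrightarrow>
           (\<exists>\<delta>>0. \<forall>t. t0 < t \<and> t < t0 + \<delta> \<longrightarrow>
               \<theta> differentiable (at t) \<and> deriv \<theta> t * (t - t0) < 0))
      \<and> ((\<exists>\<delta>>0. \<forall>t. t0 - \<delta> < t \<and> t < t0 \<longrightarrow> \<theta> t \<noteq> \<Theta>2) \<longrightarrow>
           (\<exists>\<delta>>0. \<forall>t. t0 - \<delta> < t \<and> t < t0 \<longrightarrow>
               \<theta> differentiable (at t) \<and> deriv \<theta> t * (t - t0) < 0)))"
proof -
  interpret E: extl F u x y z v p1 p2 p3 p4 \<theta>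
    by unfold_locales (use norm ext ang in auto)
  define N where "N s = (p3 0)\<^sup>2 + 2 * p4 0 * (rr F s * sin s - p2 0)" for s
  have Npos: "\<Theta>1 < s \<Longrightarrow> s < \<Theta>2 \<Longrightarrow> N s > 0" for s
    using pos Phi_sign(1)[OF norm] unfolding N_def by blast
  have N1: "N \<Theta>1 = 0" using z1 Phi_sign(2)[OF norm] unfolding N_def by blast
  have N2: "N \<Theta>2 = 0" using z2 Phi_sign(2)[OF norm] unfolding N_def by blast
  have G1: "\<forall>s. \<Theta>1 < s \<and> s < \<Theta>2 \<longrightarrow> p4 0 * (rr F s * sin s) > p4 0 * (rr F \<Theta>1 * sin \<Theta>1)"
  proof (intro allI impI)
    fix s assume "\<Theta>1 < s \<and> s < \<Theta>2"
    hence "N s > N \<Theta>1" using Npos N1 by auto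
    thus "p4 0 * (rr F s * sin s) > p4 0 * (rr F \<Theta>1 * sin \<Theta>1)" unfolding N_def by (simp add: algebra_simps)
  qed
  have G2: "\<forall>s. \<Theta>1 < s \<and> s < \<Theta>2 \<longrightarrow> p4 0 * (rr F s * sin s) > p4 0 * (rr F \<Theta>2 * sin \<Theta>2)"
  proof (intro allI impI)
    fix s assume "\<Theta>1 < s \<and> s < \<Theta>2"
    hence "N s > N \<Theta>2" using Npos N2 by auto
    thus "p4 0 * (rr F s * sin s) > p4 0 * (rr F \<Theta>2 * sin \<Theta>2)" unfolding N_def by (simp add: algebra_simps)
  qed
  have P1: "\<exists>\<epsilon>>0. \<forall>s d. \<Theta>1 < s \<and> s < \<Theta>2 \<and> s < \<Theta>1 + \<epsilon> \<and> is_rprime F s d \<longrightarrow> p4 0 * u1fun F s d > 0"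
    by (rule E.part1[OF phi4 lt G1])
  have P2: "\<exists>\<epsilon>>0. \<forall>s d. \<Theta>1 < s \<and> s < \<Theta>2 \<and> \<Theta>2 - \<epsilon> < s \<and> is_rprime F s d \<longrightarrow> p4 0 * u1fun F s d < 0"
    by (rule E.part2[OF phi4 lt G2])
  have P3: ?thesis if "True"
  proof -
    have nz: "E.w t / (rr F (\<theta> t))\<^sup>2 \<noteq> 0" if "\<Theta>1 < \<theta> t" "\<theta> t < \<Theta>2" for t
    proof -
      have "Phi F (p2 0) (p3 0) (p4 0) (\<theta> t) > 0" using pos that by blast
      hence "(E.w t / (rr F (\<theta> t))\<^sup>2)\<^sup>2 > 0" using E.thsq[of t] by simp
      thus ?thesis by auto
    qed
    have "(\<forall>t0. \<theta> t0 = \<Theta>1 \<longrightarrow>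
        ((\<exists>\<delta>>0. \<forall>t. t0 < t \<and> t < t0 + \<delta> \<longrightarrow> \<theta> t \<noteq> \<Theta>1) \<longrightarrow>
           (\<exists>\<delta>>0. \<forall>t. t0 < t \<and> t < t0 + \<delta> \<longrightarrow>
               \<theta> differentiable (at t) \<and> deriv \<theta> t * (t - t0) > 0))
      \<and> ((\<exists>\<delta>>0. \<forall>t. t0 - \<delta> < t \<and> t < t0 \<longrightarrow> \<theta> t \<noteq> \<Theta>1) \<longrightarrow>
           (\<exists>\<delta>>0. \<forall>t. t0 - \<delta> < t \<and> t < t0 \<longrightarrow>
               \<theta> differentiable (at t) \<and> deriv \<theta> t * (t - t0) > 0)))
  \<and> (\<forall>t0. \<theta> t0 = \<Theta>2 \<longrightarrow>
        ((\<exists>\<delta>>0. \<forall>t. t0 < t \<and> t < t0 + \<delta> \<longrightarrow> \<theta> t \<noteq> \<Theta>2) \<longrightarrow>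
           (\<exists>\<delta>>0. \<forall>t. t0 < t \<and> t < t0 + \<delta> \<longrightarrow>
               \<theta> differentiable (at t) \<and> deriv \<theta> t * (t - t0) < 0))
      \<and> ((\<exists>\<delta>>0. \<forall>t. t0 - \<delta> < t \<and> t < t0 \<longrightarrow> \<theta> t \<noteq> \<Theta>2) \<longrightarrow>
           (\<exists>\<delta>>0. \<forall>t. t0 - \<delta> < t \<and> t < t0 \<longrightarrow>
               \<theta> differentiable (at t) \<and> deriv \<theta> t * (t - t0) < 0)))"
      by (rule part3[OF E.thder E.D_isCont E.th_isCont nz range lt])
    thus ?thesis using P1 P2 by blast
  qed
  show ?thesis by (rule P3) simp
qed

end
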